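(* For every $\eta>0$, $$\max_{\rho\in\Delta(\Phi)}\max_{\nu\in\Delta(\Psi)}\min_{p\in\Delta(\Pi)}\mathsf{AIR}^\Phi_{\rho,\eta}(p,\nu)=\mathsf{DEC}^{\mathrm{KL}}_\eta(\mathcal M,\Phi).$$
   Context: Setting: $\mathcal M$ is a finite class of models, $\Pi$ a finite class of policies, $\mathcal O$ a (discrete) observation space. Each model $M$ specifies, for every $\pi\in\Pi$, a distribution $M(\cdot|\pi)\in\Delta(\mathcal O)$, and a value function $V_M:\Pi\to[0,1]$. For $\mu\in\Delta(\mathcal M)$ the mixture model $M^\mu$ is given by $M^\mu(\cdot|\pi)=\mathbb E_{M\sim\mu}[M(\cdot|\pi)]$ with value $V_{M^\mu}(\pi)=\mathbb E_{M\sim\mu}[V_M(\pi)]$; $\mathrm{co}(\mathcal M)$ denotes the set of all such mixtures. For a distribution $\nu$ on $\mathcal M\times\Pi$, $M^\nu$ denotes the mixture with respect to the $\mathcal M$-marginal of $\nu$. $\Phi$ is a collection of pairwise disjoint subsets of $\mathcal M\times\Pi$ and $\Psi=\bigcup_{\phi\in\Phi}\phi$. For $\nu\in\Delta(\Psi)$ write $\nu(\phi)=\sum_{(M,\pi^\star)\in\phi}\nu(M,\pi^\star)$ and define the posterior over $\Phi$ given $(\pi,o)$ by $\nu(\phi|\pi,o)=\frac{\sum_{(M,\pi^\star)\in\phi}\nu(M,\pi^\star)M(o|\pi)}{\sum_{\phi'\in\Phi}\sum_{(M,\pi^\star)\in\phi'}\nu(M,\pi^\star)M(o|\pi)}$,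 written $\nu_\phi(\cdot|\pi,o)\in\Delta(\Phi)$. For $\rho\in\Delta(\Phi)$, $\eta>0$: $\mathsf{AIR}^\Phi_{\rho,\eta}(p,\nu)=\mathbb E_{\pi\sim p}\mathbb E_{(M,\pi^\star)\sim\nu}\mathbb E_{o\sim M(\cdot|\pi)}\big[V_M(\pi^\star)-V_M(\pi)-\tfrac1\eta\mathrm{KL}(\nu_\phi(\cdot|\pi,o),\rho)\big]$. $\Phi$-dependent DEC: $$\mathsf{DEC}^{\mathrm{KL}}_\eta(\mathcal M,\Phi)=\max_{\bar M\in\mathrm{co}(\mathcal M)}\min_{p\in\Delta(\Pi)}\max_{\nu\in\Delta(\Psi)}\mathbb E_{\pi\sim p}\mathbb E_{\phi\sim\nu}\mathbb E_{(M,\pi^\star)\sim\nu(\cdot|\phi)}\Big[V_M(\pi^\star)-V_M(\pi)-\tfrac1\eta\mathrm{KL}\big(M^{\nu(\cdot|\phi)}(\cdot|\pi),\bar M(\cdot|\pi)\big)\Big],$$ where $\nu(\cdot|\phi)$ is $\nu$ conditioned on the cell $\phi$. *)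

theory Defs
  imports "HOL-Probability.Probability"
begin

text \<open>Obs M pi is the observation distribution M(.|pi), a (discrete) pmf;
  V M pi is the value V_M(pi).  Cells of Phi are sets of pairs (M, pi_star).\<close>

text \<open>We use the termwise nonnegative form
  sum_x [ f x ln (f x / g x) + g x - f x ]; for probability distributions this
  equals the usual sum_x f x ln (f x / g x) (the extra terms sum to 1 - 1 = 0),
  with the usual conventions 0 ln(0/q) = 0 and p ln(p/0) = infinity for p > 0.\<close>

definition kl_term :: "real \<Rightarrow> real \<Rightarrow> ennreal" where
  "kl_term a b = (if a = 0 then ennreal b
                  else if b = 0 then \<infinity>
                  else ennreal (a * ln (a / b) + b - a))"

definition KLf :: "('a \<Rightarrow> real) \<Rightarrow> ('a \<Rightarrow> real) \<Rightarrow> ennreal" where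
  "KLf f g = (\<integral>\<^sup>+ x. kl_term (f x) (g x) \<partial>count_space UNIV)"

definition KL :: "'a pmf \<Rightarrow> 'a pmf \<Rightarrow> ennreal" where
  "KL P Q = KLf (pmf P) (pmf Q)"

definition Psi :: "('m \<times> 'p) set set \<Rightarrow> ('m \<times> 'p) set" where
  "Psi Phi = \<Union> Phi"

text \<open>Posterior over Phi given (pi, o): nu_phi(.|pi,o), as a function on cells
  (zero outside Phi).\<close>
definition post ::
  "('m \<Rightarrow> 'p \<Rightarrow> 'o pmf) \<Rightarrow> ('m \<times> 'p) set set \<Rightarrow> ('m \<times> 'p) pmf \<Rightarrow> 'p \<Rightarrow> 'o
     \<Rightarrow> ('m \<times> 'p) set \<Rightarrow> real" where
  "post Obs Phi \<nu> \<pi> ob \<phi> =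
     (if \<phi> \<in> Phi then
        (\<Sum>x\<in>\<phi>. pmf \<nu> x * pmf (Obs (fst x) \<pi>) ob) /
        (\<Sum>\<phi>'\<in>Phi. \<Sum>x\<in>\<phi>'. pmf \<nu> x * pmf (Obs (fst x) \<pi>) ob)
      else 0)"

text \<open>AIR^Phi_{rho,eta}(p, nu) =
  E_{pi~p} E_{(M,pi*)~nu} E_{o~M(.|pi)} [V_M(pi*) - V_M(pi) - KL(nu_phi(.|pi,o), rho)/eta].
  Since the value gap does not depend on o, the innermost expectation is
  V_M(pi*) - V_M(pi) - (1/eta) E_o[KL(...)], where E_o[KL] is a [0,inf] valued
  expectation.\<close>
definition AIR ::
  "('m \<Rightarrow> 'p \<Rightarrow> 'o pmf) \<Rightarrow> ('m \<Rightarrow> 'p \<Rightarrow> real) \<Rightarrow> 'p set \<Rightarrow> ('m \<times> 'p) set set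
     \<Rightarrow> ('m \<times> 'p) set pmf \<Rightarrow> real \<Rightarrow> 'p pmf \<Rightarrow> ('m \<times> 'p) pmf \<Rightarrow> ereal" where
  "AIR Obs V Pis Phi \<rho> \<eta> p \<nu> =
     (\<Sum>\<pi>\<in>Pis. ereal (pmf p \<pi>) *
        (\<Sum>x\<in>Psi Phi. ereal (pmf \<nu> x) *
           (ereal (V (fst x) (snd x) - V (fst x) \<pi>)
            - ereal (1 / \<eta>) * enn2ereal
                (\<integral>\<^sup>+ ob. KLf (post Obs Phi \<nu> \<pi> ob) (pmf \<rho>) \<partial>measure_pmf (Obs (fst x) \<pi>)))))"

definition mix :: "('m \<Rightarrow> 'p \<Rightarrow> 'o pmf) \<Rightarrow> 'm pmf \<Rightarrow> 'p \<Rightarrow> 'o pmf" where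
  "mix Obs \<mu> \<pi> = bind_pmf \<mu> (\<lambda>M. Obs M \<pi>)"

text \<open>Inner objective of the Phi-dependent DEC, for Mbar = M^mu:
  E_{pi~p} E_{phi~nu} E_{(M,pi*)~nu(.|phi)} [V_M(pi*) - V_M(pi)
      - KL(M^{nu(.|phi)}(.|pi), Mbar(.|pi))/eta].
  The M-marginal mixture of nu(.|phi) is mix of (map_pmf fst (cond_pmf nu phi)).
  Terms with nu(phi) = 0 are multiplied by 0.\<close>
definition DEC_obj ::
  "('m \<Rightarrow> 'p \<Rightarrow> 'o pmf) \<Rightarrow> ('m \<Rightarrow> 'p \<Rightarrow> real) \<Rightarrow> 'p set \<Rightarrow> ('m \<times> 'p) set set
     \<Rightarrow> real \<Rightarrow> 'm pmf \<Rightarrow> 'p pmf \<Rightarrow> ('m \<times> 'p) pmf \<Rightarrow> ereal" where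
  "DEC_obj Obs V Pis Phi \<eta> \<mu> p \<nu> =
     (\<Sum>\<pi>\<in>Pis. ereal (pmf p \<pi>) *
        (\<Sum>\<phi>\<in>Phi. ereal (measure_pmf.prob \<nu> \<phi>) *
           (ereal (measure_pmf.expectation (cond_pmf \<nu> \<phi>)
                     (\<lambda>x. V (fst x) (snd x) - V (fst x) \<pi>))
            - ereal (1 / \<eta>) * enn2ereal
                (KL (mix Obs (map_pmf fst (cond_pmf \<nu> \<phi>)) \<pi>) (mix Obs \<mu> \<pi>)))))"

text \<open>DEC^KL_eta(M, Phi) = max over Mbar in co(M) (Mbar = M^mu, mu in Delta(M))
  min over p in Delta(Pi) max over nu in Delta(Psi) of DEC_obj.\<close>
definition DEC_KL ::
  "'m set \<Rightarrow> ('m \<Rightarrow> 'p \<Rightarrow> 'o pmf) \<Rightarrow> ('m \<Rightarrow> 'p \<Rightarrow> real) \<Rightarrow> 'p set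
     \<Rightarrow> ('m \<times> 'p) set set \<Rightarrow> real \<Rightarrow> ereal" where
  "DEC_KL Ms Obs V Pis Phi \<eta> =
     (SUP \<mu>\<in>{\<mu>. set_pmf \<mu> \<subseteq> Ms}. INF p\<in>{p. set_pmf p \<subseteq> Pis}.
        SUP \<nu>\<in>{\<nu>. set_pmf \<nu> \<subseteq> Psi Phi}. DEC_obj Obs V Pis Phi \<eta> \<mu> p \<nu>)"

end

theory Submission
  imports Defs
begin


definition mixp :: "real \<Rightarrow> 'a pmf \<Rightarrow> 'a pmf \<Rightarrow> 'a pmf" where
  "mixp t a b = bind_pmf (bernoulli_pmf t) (\<lambda>c. if c then a else b)"

lemma pmf_mixp: "0 \<le> t \<Longrightarrow> t \<le> 1 \<Longrightarrow> pmf (mixp t a b) x = t * pmf a x + (1 - t) * pmf b x"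
  unfolding mixp_def pmf_bind
  by (subst integral_measure_pmf[of UNIV]) (auto simp: UNIV_bool)

lemma set_mixp: "0 \<le> t \<Longrightarrow> t \<le> 1 \<Longrightarrow> set_pmf (mixp t a b) \<subseteq> set_pmf a \<union> set_pmf b"
  by (auto simp: set_pmf_eq pmf_mixp)

lemma minimax2:
  fixes u v :: "'a \<Rightarrow> real" and mx :: "real \<Rightarrow> 'a \<Rightarrow> 'a \<Rightarrow> 'a"
  assumes cl: "\<And>a b t. a \<in> K \<Longrightarrow> b \<in> K \<Longrightarrow> 0 \<le> t \<Longrightarrow> t \<le> 1 \<Longrightarrow> mx t a b \<in> K"
    and cu: "\<And>a b t. a \<in> K \<Longrightarrow> b \<in> K \<Longrightarrow> 0 \<le> t \<Longrightarrow> t \<le> 1 \<Longrightarrow> t * u a + (1 - t) * u b \<le> u (mx t a b)"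
    and cv: "\<And>a b t. a \<in> K \<Longrightarrow> b \<in> K \<Longrightarrow> 0 \<le> t \<Longrightarrow> t \<le> 1 \<Longrightarrow> t * v a + (1 - t) * v b \<le> v (mx t a b)"
    and mn: "\<And>a. a \<in> K \<Longrightarrow> u a \<le> 0 \<or> v a \<le> 0"
  shows "\<exists>t. 0 \<le> t \<and> t \<le> 1 \<and> (\<forall>a\<in>K. t * u a + (1 - t) * v a \<le> 0)"
proof -
  define A where "A = {a\<in>K. u a > 0}"
  define B where "B = {b\<in>K. v b > 0}"
  show ?thesis
  proof (cases "A = {}")
    case True
    have "\<forall>a\<in>K. 1 * u a + (1 - 1) * v a \<le> 0" using True unfolding A_def by auto
    then show ?thesis by (intro exI[of _ 1]) auto
  next
    case Ane: False
    show ?thesis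
    proof (cases "B = {}")
      case True
      have "\<forall>a\<in>K. 0 * u a + (1 - 0) * v a \<le> 0" using True unfolding B_def by auto
      then show ?thesis by (intro exI[of _ 0]) auto
    next
      case Bne: False
      have key: "v b * u a \<le> (- u b) * (- v a)" if a: "a \<in> A" and b: "b \<in> B" for a b
      proof (rule ccontr)
        assume neg: "\<not> ?thesis"
        have ua: "u a > 0" and aK: "a \<in> K" using a unfolding A_def by auto
        have va: "v a \<le> 0" using mn[OF aK] ua by linarith
        have vb: "v b > 0" and bK: "b \<in> K" using b unfolding B_def by auto
        have ub: "u b \<le> 0" using mn[OF bK] vb by linarith
        define l1 where "l1 = - u b / (u a - u b)"
        define l2 where "l2 = v b / (v b - v a)"
        have nn: "u b * v a < v b * u a" using neg by (simp add: mult.commute)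
        have l12: "l1 < l2" using nn ua va vb ub unfolding l1_def l2_def
          by (simp add: divide_simps algebra_simps)
        define l where "l = (l1 + l2) / 2"
        have l1l: "l1 < l" and ll2: "l < l2" using l12 unfolding l_def by auto
        have l10: "0 \<le> l1" using ua ub unfolding l1_def by (simp add: divide_simps)
        have l21: "l2 \<le> 1" using va vb unfolding l2_def by (simp add: divide_simps)
        have l0: "0 \<le> l" and l1: "l \<le> 1" using l1l ll2 l10 l21 by auto
        have "l * u a + (1 - l) * u b > 0"
        proof -
          have "l * (u a - u b) > l1 * (u a - u b)" using l1l ua ub by (intro mult_strict_right_mono) auto
          moreover have "l1 * (u a - u b) = - u b" using ua ub unfolding l1_def by (simp add: divide_simps)
          ultimately show ?thesis by (simp add: algebra_simps)
        qed
        hence "u (mx l a b) > 0" using cu[OF aK bK l0 l1] by linarith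
        moreover have "l * v a + (1 - l) * v b > 0"
        proof -
          have "l * (v b - v a) < l2 * (v b - v a)" using ll2 va vb by (intro mult_strict_right_mono) auto
          moreover have "l2 * (v b - v a) = v b" using va vb unfolding l2_def by (simp add: divide_simps)
          ultimately show ?thesis by (simp add: algebra_simps)
        qed
        hence "v (mx l a b) > 0" using cv[OF aK bK l0 l1] by linarith
        ultimately show False using mn[OF cl[OF aK bK l0 l1]] by linarith
      qed
      define R where "R = (\<lambda>b. v b / (v b - u b)) ` B"
      define t where "t = Sup R"
      have Rne: "R \<noteq> {}" using Bne unfolding R_def by auto
      have R1: "r \<le> 1 \<and> 0 < r" if rR: "r \<in> R" for r
      proof -
        obtain b where b: "b \<in> B" and r: "r = v b / (v b - u b)" using rR unfolding R_def by auto
        have vb: "v b > 0" and bK: "b \<in> K" using b unfolding B_def by auto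
        have ub: "u b \<le> 0" using mn[OF bK] vb by linarith
        show ?thesis unfolding r using vb ub by (simp add: divide_simps)
      qed
      have bdd: "bdd_above R" using R1 by (intro bdd_aboveI[of _ 1]) auto
      have tR: "r \<le> t" if "r \<in> R" for r unfolding t_def using that bdd by (rule cSup_upper)
      have t1: "t \<le> 1" unfolding t_def using Rne R1 by (intro cSup_least) auto
      have t0: "0 \<le> t" using Rne tR R1 by (meson dual_order.trans equals0I less_le_not_le)
      have tA: "t \<le> - v a / (u a - v a)" if a: "a \<in> A" for a
        unfolding t_def
      proof (rule cSup_least[OF Rne])
        fix r assume "r \<in> R"
        then obtain b where b: "b \<in> B" and r: "r = v b / (v b - u b)" unfolding R_def by auto
        have ua: "u a > 0" and aK: "a \<in> K" using a unfolding A_def by auto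
        have va: "v a \<le> 0" using mn[OF aK] ua by linarith
        have vb: "v b > 0" and bK: "b \<in> K" using b unfolding B_def by auto
        have ub: "u b \<le> 0" using mn[OF bK] vb by linarith
        have "v b * (u a - v a) \<le> (- v a) * (v b - u b)" using key[OF a b] by (simp add: algebra_simps)
        then show "r \<le> - v a / (u a - v a)" unfolding r using ua va vb ub
          by (simp add: divide_simps mult.commute)
      qed
      have "\<forall>a\<in>K. t * u a + (1 - t) * v a \<le> 0"
      proof
        fix a assume aK: "a \<in> K"
        show "t * u a + (1 - t) * v a \<le> 0"
        proof (cases "a \<in> A")
          case True
          have ua: "u a > 0" using True unfolding A_def by auto
          have va: "v a \<le> 0" using mn[OF aK] ua by linarith
          have "t * (u a - v a) \<le> - v a" using tA[OF True] ua va by (simp add: divide_simps)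
          then show ?thesis by (simp add: algebra_simps)
        next
          case nA: False
          show ?thesis
          proof (cases "a \<in> B")
            case True
            have vb: "v a > 0" using True unfolding B_def by auto
            have ub: "u a \<le> 0" using mn[OF aK] vb by linarith
            have "v a / (v a - u a) \<le> t" using tR True unfolding R_def by auto
            hence "v a \<le> t * (v a - u a)" using vb ub by (simp add: divide_simps)
            then show ?thesis by (simp add: algebra_simps)
          next
            case False
            then have "u a \<le> 0" "v a \<le> 0" using nA aK unfolding A_def B_def by auto
            then show ?thesis using t0 t1 by (meson add_nonpos_nonpos diff_ge_0_iff_ge mult_nonneg_nonpos)
          qed
        qed
      qed
      then show ?thesis using t0 t1 by blast
    qed
  qed
qed

lemma minimax_fin:
  fixes g :: "'p \<Rightarrow> 'a \<Rightarrow> real" and mx :: "real \<Rightarrow> 'a \<Rightarrow> 'a \<Rightarrow> 'a"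
  assumes "finite P" "P \<noteq> {}"
  shows "(\<And>a b t. a \<in> K \<Longrightarrow> b \<in> K \<Longrightarrow> 0 \<le> t \<Longrightarrow> t \<le> 1 \<Longrightarrow> mx t a b \<in> K) \<Longrightarrow>
    (\<And>\<pi> a b t. \<pi> \<in> P \<Longrightarrow> a \<in> K \<Longrightarrow> b \<in> K \<Longrightarrow> 0 \<le> t \<Longrightarrow> t \<le> 1 \<Longrightarrow>
       t * g \<pi> a + (1 - t) * g \<pi> b \<le> g \<pi> (mx t a b)) \<Longrightarrow>
    (\<And>a. a \<in> K \<Longrightarrow> \<exists>\<pi>\<in>P. g \<pi> a \<le> c) \<Longrightarrow>
    \<exists>q. set_pmf q \<subseteq> P \<and> (\<forall>a\<in>K. (\<Sum>\<pi>\<in>P. pmf q \<pi> * g \<pi> a) \<le> c)"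
  using assms
proof (induction P arbitrary: K rule: finite_ne_induct)
  case (singleton x)
  show ?case using singleton.prems(3) by (intro exI[of _ "return_pmf x"]) auto
next
  case (insert x F)
  define K' where "K' = {a\<in>K. g x a > c}"
  have "\<exists>q. set_pmf q \<subseteq> F \<and> (\<forall>a\<in>K'. (\<Sum>\<pi>\<in>F. pmf q \<pi> * g \<pi> a) \<le> c)"
  proof (rule insert.IH)
    fix a b and t :: real assume a: "a \<in> K'" and b: "b \<in> K'" and t: "0 \<le> t" "t \<le> 1"
    have "mx (t::real) a b \<in> K" using a b t insert.prems(1) unfolding K'_def by auto
    moreover have "t * g x a + (1 - t) * g x b \<le> g x (mx t a b)"
      using a b t insert.prems(2)[of x a b t] unfolding K'_def by auto
    moreover have "t * g x a + (1 - t) * g x b > c"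
    proof -
      have "t * g x a \<ge> t * c" "(1 - t) * g x b \<ge> (1 - t) * c"
        using a b t unfolding K'_def by (auto intro: mult_left_mono)
      moreover have "t * g x a > t * c \<or> (1 - t) * g x b > (1 - t) * c"
        using a b t unfolding K'_def
        by (cases "t = 0") (auto intro: mult_strict_left_mono)
      ultimately show ?thesis by (auto simp: algebra_simps)
    qed
    ultimately show "mx t a b \<in> K'" unfolding K'_def by auto
  next
    fix \<pi> a b and t :: real assume "\<pi> \<in> F" "a \<in> K'" "b \<in> K'" "0 \<le> t" "t \<le> 1"
    then show "t * g \<pi> a + (1 - t) * g \<pi> b \<le> g \<pi> (mx t a b)"
      using insert.prems(2) unfolding K'_def by auto
  next
    fix a assume "a \<in> K'"
    then show "\<exists>\<pi>\<in>F. g \<pi> a \<le> c" using insert.prems(3)[of a] unfolding K'_def by auto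
  qed
  then obtain q' where q': "set_pmf q' \<subseteq> F" and q'c: "\<forall>a\<in>K'. (\<Sum>\<pi>\<in>F. pmf q' \<pi> * g \<pi> a) \<le> c"
    by blast
  define h where "h = (\<lambda>a. (\<Sum>\<pi>\<in>F. pmf q' \<pi> * g \<pi> a))"
  have "\<exists>t. 0 \<le> t \<and> t \<le> 1 \<and> (\<forall>a\<in>K. t * (h a - c) + (1 - t) * (g x a - c) \<le> 0)"
  proof (rule minimax2[where mx = mx])
    show "\<And>a b t. a \<in> K \<Longrightarrow> b \<in> K \<Longrightarrow> 0 \<le> t \<Longrightarrow> t \<le> 1 \<Longrightarrow> mx t a b \<in> K" by (rule insert.prems(1))
  next
    fix a b and t :: real assume ab: "a \<in> K" "b \<in> K" and t: "0 \<le> t" "t \<le> 1"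
    have "t * h a + (1 - t) * h b = (\<Sum>\<pi>\<in>F. pmf q' \<pi> * (t * g \<pi> a + (1 - t) * g \<pi> b))"
      unfolding h_def sum_distrib_left sum.distrib[symmetric] by (intro sum.cong) (auto simp: algebra_simps)
    also have "\<dots> \<le> h (mx t a b)" unfolding h_def
      using insert.prems(2) ab t by (intro sum_mono mult_left_mono) auto
    finally show "t * (h a - c) + (1 - t) * (h b - c) \<le> h (mx t a b) - c" by (simp add: algebra_simps)
  next
    fix a b and t :: real assume ab: "a \<in> K" "b \<in> K" and t: "0 \<le> t" "t \<le> 1"
    have "t * g x a + (1 - t) * g x b \<le> g x (mx t a b)" using insert.prems(2) ab t by auto
    then show "t * (g x a - c) + (1 - t) * (g x b - c) \<le> g x (mx t a b) - c" by (simp add: algebra_simps)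
  next
    fix a assume "a \<in> K"
    then show "h a - c \<le> 0 \<or> g x a - c \<le> 0" using q'c unfolding K'_def h_def by force
  qed
  then obtain t where t: "0 \<le> t" "t \<le> 1" and tK: "\<forall>a\<in>K. t * (h a - c) + (1 - t) * (g x a - c) \<le> 0"
    by blast
  define q where "q = mixp t q' (return_pmf x)"
  have sq: "set_pmf q \<subseteq> insert x F" using set_mixp[OF t, of q' "return_pmf x"] q' unfolding q_def by auto
  have px: "pmf q' x = 0" using q' insert.hyps by (auto simp: set_pmf_eq)
  have "(\<Sum>\<pi>\<in>insert x F. pmf q \<pi> * g \<pi> a) = t * h a + (1 - t) * g x a" for a
  proof -
    have "(\<Sum>\<pi>\<in>insert x F. pmf q \<pi> * g \<pi> a) = pmf q x * g x a + (\<Sum>\<pi>\<in>F. pmf q \<pi> * g \<pi> a)"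
      using insert.hyps by simp
    also have "pmf q x = 1 - t" unfolding q_def pmf_mixp[OF t] by (simp add: px)
    also have "(\<Sum>\<pi>\<in>F. pmf q \<pi> * g \<pi> a) = (\<Sum>\<pi>\<in>F. t * (pmf q' \<pi> * g \<pi> a))"
      unfolding q_def pmf_mixp[OF t] using insert.hyps by (intro sum.cong) (auto simp: indicator_def)
    finally show ?thesis unfolding h_def by (simp add: sum_distrib_left)
  qed
  note eq = this
  have "\<forall>a\<in>K. (\<Sum>\<pi>\<in>insert x F. pmf q \<pi> * g \<pi> a) \<le> c"
  proof
    fix a assume "a \<in> K"
    then have "t * (h a - c) + (1 - t) * (g x a - c) \<le> 0" using tK by blast
    then show "(\<Sum>\<pi>\<in>insert x F. pmf q \<pi> * g \<pi> a) \<le> c" unfolding eq by (simp add: algebra_simps)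
  qed
  with sq show ?case by blast
qed



lemma klr_nonneg: "0 < (a::real) \<Longrightarrow> 0 < b \<Longrightarrow> 0 \<le> a * ln (a / b) + b - a"
proof -
  assume a: "0 < a" and b: "0 < b"
  have "ln (b / a) \<le> b / a - 1" by (rule ln_le_minus_one) (use a b in auto)
  hence "a * ln (b / a) \<le> a * (b / a - 1)" using a by (intro mult_left_mono) auto
  moreover have "ln (a / b) = - ln (b / a)" using a b by (simp add: ln_div)
  moreover have "a * (b / a - 1) = b - a" using a by (simp add: field_simps)
  ultimately have "a * ln (a / b) \<ge> a - b" by simp
  then show ?thesis by linarith
qed

lemma ennreal_cancel1: "(x::ennreal) + 1 \<le> y + 1 \<Longrightarrow> x \<le> y"
proof -
  assume h: "x + 1 \<le> y + 1"
  have "1 + x \<le> 1 + y" using h by (simp only: add.commute)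
  then show ?thesis using ennreal_add_left_cancel_le[of 1 x y] by simp
qed

lemma nn_integral_pmf_1: "(\<integral>\<^sup>+ x. ennreal (pmf P x) \<partial>count_space UNIV) = 1"
  by (simp add: nn_integral_pmf measure_pmf.emeasure_space_1[simplified])

lemma kl_shift_pt:
  assumes "0 \<le> a" "0 \<le> b" "0 \<le> b'" "0 < k" "k * b \<le> b'" "k \<le> 1"
  shows "kl_term a b' + ennreal b \<le> kl_term a b + ennreal (a * ln (1 / k)) + ennreal b'"
proof (cases "a = 0")
  case True then show ?thesis by (simp add: kl_term_def add.commute)
next
  case a: False
  show ?thesis
  proof (cases "b = 0")
    case True then show ?thesis using a by (simp add: kl_term_def)
  next
    case b: False
    have a0: "a > 0" and b0: "b > 0" using a b assms by auto
    have "k * b > 0" using assms b0 by simp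
    then have b'0: "b' > 0" using assms by linarith
    have lnk: "ln (1 / k) \<ge> 0" using assms by auto
    have "ln (a / b') \<le> ln (a / (k * b))" using a0 b0 b'0 assms by (intro ln_mono) (auto simp: divide_simps mult.commute)
    also have "ln (a / (k * b)) = ln (a / b) + ln (1 / k)" using a0 b0 assms by (simp add: ln_div ln_mult)
    finally have l0: "ln (a / b') \<le> ln (a / b) + ln (1 / k)" .
    have l: "a * ln (a / b') \<le> a * ln (a / b) + a * ln (1 / k)"
      using mult_left_mono[OF l0, of a] a0 by (simp add: distrib_left)
    have n1: "0 \<le> a * ln (a / b') + b' - a" using klr_nonneg[OF a0 b'0] .
    have n2: "0 \<le> a * ln (a / b) + b - a" using klr_nonneg[OF a0 b0] .
    have "kl_term a b' + ennreal b = ennreal (a * ln (a / b') + b' - a + b)"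
      using a b b'0 n1 assms by (simp add: kl_term_def )
    also have "\<dots> \<le> ennreal (a * ln (a / b) + b - a + a * ln (1 / k) + b')"
      using l by (intro ennreal_leI) linarith
    also have "\<dots> = kl_term a b + ennreal (a * ln (1 / k)) + ennreal b'"
      using a b n2 assms lnk a0 by (simp add: kl_term_def )
    finally show ?thesis .
  qed
qed

lemma KL_shift:
  assumes "0 < k" "k \<le> 1" "\<And>x. k * pmf Q x \<le> pmf Q' x"
  shows "KL P Q' \<le> KL P Q + ennreal (ln (1 / k))"
proof -
  have "KL P Q' + 1 = (\<integral>\<^sup>+ x. kl_term (pmf P x) (pmf Q' x) + ennreal (pmf Q x) \<partial>count_space UNIV)"
    unfolding KL_def KLf_def by (subst nn_integral_add) (auto simp: nn_integral_pmf_1)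
  also have "\<dots> \<le> (\<integral>\<^sup>+ x. kl_term (pmf P x) (pmf Q x) + ennreal (ln (1/k)) * ennreal (pmf P x) + ennreal (pmf Q' x) \<partial>count_space UNIV)"
  proof (intro nn_integral_mono)
    fix x
    have "ln (1/k) \<ge> 0" using assms by auto
    then have e: "ennreal (ln (1/k)) * ennreal (pmf P x) = ennreal (pmf P x * ln (1/k))"
      by (simp add: ennreal_mult'[symmetric] mult.commute)
    show "kl_term (pmf P x) (pmf Q' x) + ennreal (pmf Q x) \<le> kl_term (pmf P x) (pmf Q x) + ennreal (ln (1/k)) * ennreal (pmf P x) + ennreal (pmf Q' x)"
      unfolding e by (rule kl_shift_pt) (auto simp: assms)
  qed
  also have "\<dots> = KL P Q + ennreal (ln (1/k)) + 1"
    unfolding KL_def KLf_def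
    by (subst nn_integral_add, simp, simp, subst nn_integral_add, simp, simp, subst nn_integral_cmult)
       (auto simp: nn_integral_pmf_1)
  finally show ?thesis by (rule ennreal_cancel1)
qed

lemma kl_bound_pt:
  assumes "0 \<le> a" "0 \<le> b" "a \<le> C * b" "1 \<le> C"
  shows "kl_term a b + ennreal a \<le> ennreal (a * ln C) + ennreal b"
proof (cases "a = 0")
  case True then show ?thesis by (simp add: kl_term_def)
next
  case a: False
  have a0: "a > 0" using a assms by auto
  have b0: "b > 0"
  proof (rule ccontr)
    assume "\<not> b > 0" then have "b = 0" using assms by simp
    then show False using a0 assms by simp
  qed
  have "ln (a / b) \<le> ln C" using a0 b0 assms by (intro ln_mono) (auto simp: divide_simps mult.commute)
  hence l: "a * ln (a / b) \<le> a * ln C" using a0 by (intro mult_left_mono) auto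
  have n2: "0 \<le> a * ln (a / b) + b - a" using klr_nonneg[OF a0 b0] .
  have "kl_term a b = ennreal (a * ln (a / b) + b - a)" using a0 b0 by (simp add: kl_term_def)
  then have "kl_term a b + ennreal a = ennreal (a * ln (a / b) + b - a + a)"
    using n2 a0 by (subst ennreal_plus) auto
  also have "\<dots> \<le> ennreal (a * ln C + b)" using l by (intro ennreal_leI) linarith
  also have "\<dots> = ennreal (a * ln C) + ennreal b" using assms a0 b0 by (simp add: )
  finally show ?thesis .
qed

lemma KL_bound:
  assumes "1 \<le> C" "\<And>x. pmf P x \<le> C * pmf Q x"
  shows "KL P Q \<le> ennreal (ln C)"
proof -
  have "KL P Q + 1 = (\<integral>\<^sup>+ x. kl_term (pmf P x) (pmf Q x) + ennreal (pmf P x) \<partial>count_space UNIV)"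
    unfolding KL_def KLf_def by (subst nn_integral_add) (auto simp: nn_integral_pmf_1)
  also have "\<dots> \<le> (\<integral>\<^sup>+ x. ennreal (ln C) * ennreal (pmf P x) + ennreal (pmf Q x) \<partial>count_space UNIV)"
  proof (intro nn_integral_mono)
    fix x
    have "ln C \<ge> 0" using assms by auto
    then have e: "ennreal (ln C) * ennreal (pmf P x) = ennreal (pmf P x * ln C)"
      by (simp add: ennreal_mult'[symmetric] mult.commute)
    show "kl_term (pmf P x) (pmf Q x) + ennreal (pmf P x) \<le> ennreal (ln C) * ennreal (pmf P x) + ennreal (pmf Q x)"
      unfolding e by (rule kl_bound_pt) (auto simp: assms)
  qed
  also have "\<dots> = ennreal (ln C) + 1"
    by (subst nn_integral_add, simp, simp, subst nn_integral_cmult) (auto simp: nn_integral_pmf_1)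
  finally show ?thesis by (rule ennreal_cancel1)
qed



definition Lg :: "real \<Rightarrow> real \<Rightarrow> real" where
  "Lg x y = (if x = 0 then 0 else x * ln (x / y))"

lemma ln_ge_1_minus_inv: "0 < (z::real) \<Longrightarrow> 1 - 1 / z \<le> ln z"
proof -
  assume z: "0 < z"
  have "ln (1 / z) \<le> 1 / z - 1" using z by (intro ln_le_minus_one) auto
  moreover have "ln (1 / z) = - ln z" using z by (simp add: ln_div)
  ultimately show ?thesis by linarith
qed

lemma logsum_i:
  assumes "0 \<le> x" "0 \<le> y" "y = 0 \<longrightarrow> x = 0" "0 < Sx" "0 < Sy"
  shows "x * ln (Sx / Sy) + x - y * Sx / Sy \<le> Lg x y"
proof (cases "x = 0")
  case True then show ?thesis using assms by (simp add: Lg_def)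
next
  case False
  then have x: "x > 0" and y: "y > 0" using assms by auto
  define z where "z = x * Sy / (y * Sx)"
  have z0: "z > 0" unfolding z_def using x y assms by auto
  have "x * (1 - 1 / z) \<le> x * ln z" using ln_ge_1_minus_inv[OF z0] x by (intro mult_left_mono) auto
  moreover have "x * (1 - 1 / z) = x - y * Sx / Sy" unfolding z_def using x y assms by (simp add: field_simps)
  moreover have "ln z = ln (x / y) - ln (Sx / Sy)" unfolding z_def using x y assms
    by (simp add: ln_div ln_mult)
  ultimately have "x - y * Sx / Sy \<le> x * ln (x / y) - x * ln (Sx / Sy)" by (simp add: algebra_simps)
  then show ?thesis using False by (simp add: Lg_def)
qed

lemma logsum:
  assumes "0 \<le> x1" "0 \<le> x2" "0 \<le> y1" "0 \<le> y2" "y1 = 0 \<longrightarrow> x1 = 0" "y2 = 0 \<longrightarrow> x2 = 0" "0 < x1 + x2"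
  shows "(x1 + x2) * ln ((x1 + x2) / (y1 + y2)) \<le> Lg x1 y1 + Lg x2 y2"
proof -
  have Sy: "0 < y1 + y2"
  proof (rule ccontr)
    assume "\<not> 0 < y1 + y2" then have "y1 = 0" "y2 = 0" using assms by auto
    then show False using assms by auto
  qed
  note l1 = logsum_i[OF assms(1,3,5,7) Sy] and l2 = logsum_i[OF assms(2,4,6,7) Sy]
  have "y1 * (x1 + x2) / (y1 + y2) + y2 * (x1 + x2) / (y1 + y2) = (y1 + y2) * (x1 + x2) / (y1 + y2)"
    by (simp add: add_divide_distrib distrib_right)
  also have "\<dots> = x1 + x2" using Sy by simp
  finally have "y1 * (x1 + x2) / (y1 + y2) + y2 * (x1 + x2) / (y1 + y2) = x1 + x2" .
  then show ?thesis using l1 l2 by (simp add: algebra_simps)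
qed

definition persp :: "real \<Rightarrow> real \<Rightarrow> real \<Rightarrow> ennreal" where
  "persp w a q = ennreal w * kl_term (a / w) q"

definition Fr :: "real \<Rightarrow> real \<Rightarrow> real \<Rightarrow> real" where
  "Fr w a q = Lg a (w * q) + w * q - a"

lemma Fr_nonneg: "0 \<le> w \<Longrightarrow> 0 \<le> a \<Longrightarrow> (w = 0 \<longrightarrow> a = 0) \<Longrightarrow> 0 < q \<Longrightarrow> 0 \<le> Fr w a q"
  unfolding Fr_def Lg_def using klr_nonneg[of a "w * q"]
  by (cases "a = 0") auto

lemma persp_pos:
  assumes "0 \<le> w" "0 \<le> a" "w = 0 \<longrightarrow> a = 0" "0 < q"
  shows "persp w a q = ennreal (Fr w a q)"
proof (cases "a = 0")
  case True then show ?thesis using assms by (simp add: persp_def kl_term_def Fr_def Lg_def ennreal_mult'[symmetric])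
next
  case False
  then have a: "a > 0" and w: "w > 0" using assms by auto
  have n: "0 \<le> a / w * ln (a / w / q) + q - a / w" using klr_nonneg[of "a/w" q] a w assms by auto
  have "persp w a q = ennreal (w * (a / w * ln (a / w / q) + q - a / w))"
    unfolding persp_def kl_term_def using a w assms n by (simp add: ennreal_mult)
  also have "w * (a / w * ln (a / w / q) + q - a / w) = Fr w a q"
    unfolding Fr_def Lg_def using a w by (simp add: field_simps)
  finally show ?thesis .
qed

lemma persp_zero_q:
  assumes "0 \<le> w" "0 \<le> a" "w = 0 \<longrightarrow> a = 0"
  shows "persp w a 0 = (if a = 0 then 0 else \<infinity>)"
  using assms by (auto simp: persp_def kl_term_def ennreal_mult_top)

lemma persp_convex:
  assumes t: "0 \<le> t" "t \<le> 1" and nn: "0 \<le> a1" "0 \<le> a2" "0 \<le> w1" "0 \<le> w2"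
    and z: "w1 = 0 \<longrightarrow> a1 = 0" "w2 = 0 \<longrightarrow> a2 = 0" and q: "0 \<le> q"
  shows "persp (t * w1 + (1 - t) * w2) (t * a1 + (1 - t) * a2) q
           \<le> ennreal t * persp w1 a1 q + ennreal (1 - t) * persp w2 a2 q"
proof (cases "t = 0 \<or> t = 1")
  case True then show ?thesis by auto
next
  case False
  then have t0: "0 < t" and t1: "t < 1" using t by auto
  have Wnn: "0 \<le> t * w1 + (1 - t) * w2" and Ann: "0 \<le> t * a1 + (1 - t) * a2" using t nn by auto
  have Wz: "t * w1 + (1 - t) * w2 = 0 \<longrightarrow> t * a1 + (1 - t) * a2 = 0"
  proof
    assume "t * w1 + (1 - t) * w2 = 0"
    then have "w1 = 0" "w2 = 0" using t0 t1 nn by (auto simp: add_nonneg_eq_0_iff)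
    then show "t * a1 + (1 - t) * a2 = 0" using z by auto
  qed
  show ?thesis
  proof (cases "q = 0")
    case True
    show ?thesis
    proof (cases "t * a1 + (1 - t) * a2 = 0")
      case True
      then show ?thesis using \<open>q = 0\<close> persp_zero_q[OF Wnn Ann Wz] by simp
    next
      case False
      then have "a1 \<noteq> 0 \<or> a2 \<noteq> 0" by auto
      then have "ennreal t * persp w1 a1 q + ennreal (1 - t) * persp w2 a2 q = \<infinity>"
        using \<open>q = 0\<close> persp_zero_q[OF nn(3,1) z(1)] persp_zero_q[OF nn(4,2) z(2)] t0 t1
        by (auto simp: ennreal_mult_top)
      then show ?thesis by (metis top_greatest infinity_ennreal_def)
    qed
  next
    case False
    then have q0: "q > 0" using q by auto
    have e1: "persp w1 a1 q = ennreal (Fr w1 a1 q)" by (rule persp_pos[OF nn(3,1) z(1) q0])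
    have e2: "persp w2 a2 q = ennreal (Fr w2 a2 q)" by (rule persp_pos[OF nn(4,2) z(2) q0])
    have e: "persp (t * w1 + (1 - t) * w2) (t * a1 + (1 - t) * a2) q
        = ennreal (Fr (t * w1 + (1 - t) * w2) (t * a1 + (1 - t) * a2) q)" by (rule persp_pos[OF Wnn Ann Wz q0])
    have f1: "0 \<le> Fr w1 a1 q" by (rule Fr_nonneg[OF nn(3,1) z(1) q0])
    have f2: "0 \<le> Fr w2 a2 q" by (rule Fr_nonneg[OF nn(4,2) z(2) q0])
    have r: "ennreal t * ennreal (Fr w1 a1 q) + ennreal (1 - t) * ennreal (Fr w2 a2 q)
        = ennreal (t * Fr w1 a1 q + (1 - t) * Fr w2 a2 q)"
      using t f1 f2 by (simp add: ennreal_mult'[symmetric] ennreal_plus)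
    have key: "Lg (t * a1 + (1 - t) * a2) ((t * w1 + (1 - t) * w2) * q) \<le> t * Lg a1 (w1 * q) + (1 - t) * Lg a2 (w2 * q)"
    proof (cases "t * a1 + (1 - t) * a2 = 0")
      case True
      have "t * a1 = 0" "(1 - t) * a2 = 0" using True t0 t1 nn by (auto simp: add_nonneg_eq_0_iff)
      then have "a1 = 0" "a2 = 0" using t0 t1 by auto
      then show ?thesis using True by (simp add: Lg_def)
    next
      case A: False
      have A0: "0 < t * a1 + (1 - t) * a2" using A Ann by auto
      have ls: "(t * a1 + (1 - t) * a2) * ln ((t * a1 + (1 - t) * a2) / (t * (w1 * q) + (1 - t) * (w2 * q)))
          \<le> Lg (t * a1) (t * (w1 * q)) + Lg ((1 - t) * a2) ((1 - t) * (w2 * q))"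
        using t0 t1 nn z q0 A0 by (intro logsum) auto
      have "Lg (t * a1) (t * (w1 * q)) = t * Lg a1 (w1 * q)" using t0 by (simp add: Lg_def)
      moreover have "Lg ((1 - t) * a2) ((1 - t) * (w2 * q)) = (1 - t) * Lg a2 (w2 * q)" using t1 by (simp add: Lg_def)
      moreover have "(t * (w1 * q) + (1 - t) * (w2 * q)) = (t * w1 + (1 - t) * w2) * q" by (simp add: algebra_simps)
      ultimately show ?thesis using ls A by (simp add: Lg_def)
    qed
    have "Fr (t * w1 + (1 - t) * w2) (t * a1 + (1 - t) * a2) q \<le> t * Fr w1 a1 q + (1 - t) * Fr w2 a2 q"
      using key unfolding Fr_def by (simp add: algebra_simps)
    then show ?thesis unfolding e e1 e2 r by (intro ennreal_leI)
  qed
qed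



lemma ereal_minus_enn_add:
  "(ereal r - enn2ereal X) + (ereal R - enn2ereal Y) = ereal (r + R) - enn2ereal (X + Y)"
proof (cases "X = top \<or> Y = top")
  case True
  have f: "ereal r - enn2ereal X \<noteq> \<infinity>" "ereal R - enn2ereal Y \<noteq> \<infinity>"
    using enn2ereal_nonneg[of X] enn2ereal_nonneg[of Y]
    by (cases "enn2ereal X"; auto) (cases "enn2ereal Y"; auto)
  then show ?thesis using True by (auto simp: plus_ennreal.rep_eq)
next
  case False
  then obtain x y where "X = ennreal x" "Y = ennreal y" "0 \<le> x" "0 \<le> y"
    by (metis ennreal_cases top.extremum_unique infinity_ennreal_def order_top_class.top_greatest)
  then show ?thesis by (simp del: ennreal_plus add: ennreal_plus[symmetric])
qed

lemma ereal_term_form: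
  assumes "0 \<le> a" "0 \<le> c"
  shows "ereal a * (ereal b - ereal c * enn2ereal e) = ereal (a * b) - enn2ereal (ennreal (a * c) * e)"
proof (cases "a = 0")
  case True then show ?thesis by (simp add: zero_ennreal.rep_eq zero_ereal_def[symmetric])
next
  case a: False
  show ?thesis
  proof (cases "e = top")
    case True
    show ?thesis
    proof (cases "c = 0")
      case True then show ?thesis using \<open>e = top\<close> by (simp add: zero_ennreal.rep_eq zero_ereal_def[symmetric])
    next
      case False
      then show ?thesis using \<open>e = top\<close> a assms by (simp add: ennreal_mult_top times_ennreal.rep_eq)
    qed
  next
    case False
    then obtain y where y: "e = ennreal y" "0 \<le> y" by (cases e rule: ennreal_cases) auto
    have "ennreal (a * c) * ennreal y = ennreal (a * c * y)" using assms y by (simp add: ennreal_mult)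
    then show ?thesis using y assms by (simp add: algebra_simps)
  qed
qed

lemma ereal_sum_form:
  "finite S \<Longrightarrow> (\<Sum>x\<in>S. ereal (r x) - enn2ereal (X x)) = ereal (\<Sum>x\<in>S. r x) - enn2ereal (\<Sum>x\<in>S. X x)"
proof (induction S rule: finite_induct)
  case empty then show ?case by (simp add: zero_ennreal.rep_eq)
next
  case (insert a S)
  then show ?case using ereal_minus_enn_add by simp
qed

lemma ereal_lin_form:
  assumes "finite S" "\<And>x. x \<in> S \<Longrightarrow> 0 \<le> a x" "0 \<le> c"
  shows "(\<Sum>x\<in>S. ereal (a x) * (ereal (b x) - ereal c * enn2ereal (e x)))
       = ereal (\<Sum>x\<in>S. a x * b x) - enn2ereal (ennreal c * (\<Sum>x\<in>S. ennreal (a x) * e x))"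
proof -
  have "(\<Sum>x\<in>S. ereal (a x) * (ereal (b x) - ereal c * enn2ereal (e x)))
      = (\<Sum>x\<in>S. ereal (a x * b x) - enn2ereal (ennreal (a x * c) * e x))"
    using assms by (intro sum.cong refl ereal_term_form) auto
  also have "\<dots> = ereal (\<Sum>x\<in>S. a x * b x) - enn2ereal (\<Sum>x\<in>S. ennreal (a x * c) * e x)"
    by (rule ereal_sum_form[OF assms(1)])
  also have "(\<Sum>x\<in>S. ennreal (a x * c) * e x) = ennreal c * (\<Sum>x\<in>S. ennreal (a x) * e x)"
    unfolding sum_distrib_left using assms
    by (intro sum.cong refl) (simp add: ennreal_mult mult.assoc mult.left_commute)
  finally show ?thesis .
qed



locale setting =
  fixes Ms :: "'m set" and Pis :: "'p set" and Obs :: "'m \<Rightarrow> 'p \<Rightarrow> 'o pmf" and V :: "'m \<Rightarrow> 'p \<Rightarrow> real"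
    and Phi :: "('m \<times> 'p) set set" and \<eta> :: real
  assumes fMs: "finite Ms" and neMs: "Ms \<noteq> {}" and fPis: "finite Pis" and nePis: "Pis \<noteq> {}"
    and Vb: "\<And>M \<pi>. M \<in> Ms \<Longrightarrow> \<pi> \<in> Pis \<Longrightarrow> 0 \<le> V M \<pi> \<and> V M \<pi> \<le> 1"
    and cells: "\<And>\<phi>. \<phi> \<in> Phi \<Longrightarrow> \<phi> \<subseteq> Ms \<times> Pis"
    and disj: "\<And>\<phi> \<phi>'. \<phi> \<in> Phi \<Longrightarrow> \<phi>' \<in> Phi \<Longrightarrow> \<phi> \<noteq> \<phi>' \<Longrightarrow> \<phi> \<inter> \<phi>' = {}"
    and eta: "\<eta> > 0"
begin

definition mc where "mc \<nu> \<pi> \<phi> ob = (\<Sum>x\<in>\<phi>. pmf \<nu> x * pmf (Obs (fst x) \<pi>) ob)"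
definition mt where "mt \<nu> \<pi> ob = (\<Sum>\<phi>'\<in>Phi. mc \<nu> \<pi> \<phi>' ob)"
abbreviation wt where "wt \<nu> \<phi> \<equiv> measure_pmf.prob \<nu> \<phi>"
definition KK where "KK = {\<nu>. set_pmf \<nu> \<subseteq> Psi Phi}"

lemma finPhi: "finite Phi"
proof -
  have "Phi \<subseteq> Pow (Ms \<times> Pis)" using cells by auto
  then show ?thesis using fMs fPis by (meson finite_Pow_iff finite_SigmaI finite_subset)
qed

lemma finCell: "\<phi> \<in> Phi \<Longrightarrow> finite \<phi>"
  using cells fMs fPis by (meson finite_SigmaI finite_subset)

lemma PsiSub: "Psi Phi \<subseteq> Ms \<times> Pis" using cells unfolding Psi_def by auto

lemma finPsi: "finite (Psi Phi)" using PsiSub fMs fPis by (meson finite_SigmaI finite_subset)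

lemma sum_Psi: "(\<Sum>x\<in>Psi Phi. f x) = (\<Sum>\<phi>\<in>Phi. \<Sum>x\<in>\<phi>. f x)"
  unfolding Psi_def using finCell disj by (subst sum.Union_disjoint) auto

lemma wt_eq: "\<phi> \<in> Phi \<Longrightarrow> wt \<nu> \<phi> = (\<Sum>x\<in>\<phi>. pmf \<nu> x)"
  using finCell by (simp add: measure_measure_pmf_finite)

lemma wt_total: "\<nu> \<in> KK \<Longrightarrow> (\<Sum>\<phi>\<in>Phi. wt \<nu> \<phi>) = 1"
proof -
  assume "\<nu> \<in> KK"
  then have "(\<Sum>x\<in>Psi Phi. pmf \<nu> x) = 1" unfolding KK_def using finPsi by (intro sum_pmf_eq_1) auto
  moreover have "(\<Sum>\<phi>\<in>Phi. wt \<nu> \<phi>) = (\<Sum>\<phi>\<in>Phi. \<Sum>x\<in>\<phi>. pmf \<nu> x)"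
    by (intro sum.cong) (auto simp: wt_eq)
  ultimately show ?thesis using sum_Psi[of "pmf \<nu>"] by simp
qed

lemma mc_nn: "0 \<le> mc \<nu> \<pi> \<phi> ob" unfolding mc_def by (intro sum_nonneg) auto
lemma mt_nn: "0 \<le> mt \<nu> \<pi> ob" unfolding mt_def using mc_nn by (intro sum_nonneg) auto

lemma mc_zero: "\<phi> \<in> Phi \<Longrightarrow> wt \<nu> \<phi> = 0 \<Longrightarrow> mc \<nu> \<pi> \<phi> ob = 0"
proof -
  assume p: "\<phi> \<in> Phi" "wt \<nu> \<phi> = 0"
  then have "\<forall>x\<in>\<phi>. pmf \<nu> x = 0" using wt_eq[OF p(1)] finCell[OF p(1)] by (simp add: sum_nonneg_eq_0_iff)
  then show ?thesis unfolding mc_def by simp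
qed

lemma mc_le_mt: "\<phi> \<in> Phi \<Longrightarrow> mc \<nu> \<pi> \<phi> ob \<le> mt \<nu> \<pi> ob"
  unfolding mt_def using finPhi mc_nn by (intro member_le_sum) auto

lemma int_mc: "\<phi> \<in> Phi \<Longrightarrow> (\<integral>\<^sup>+ ob. ennreal (mc \<nu> \<pi> \<phi> ob) \<partial>count_space UNIV) = ennreal (wt \<nu> \<phi>)"
proof -
  assume p: "\<phi> \<in> Phi"
  have "(\<integral>\<^sup>+ ob. ennreal (mc \<nu> \<pi> \<phi> ob) \<partial>count_space UNIV)
      = (\<integral>\<^sup>+ ob. (\<Sum>x\<in>\<phi>. ennreal (pmf \<nu> x * pmf (Obs (fst x) \<pi>) ob)) \<partial>count_space UNIV)"
    unfolding mc_def by (intro nn_integral_cong) (subst sum_ennreal, auto)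
  also have "\<dots> = (\<Sum>x\<in>\<phi>. ennreal (pmf \<nu> x) * (\<integral>\<^sup>+ ob. ennreal (pmf (Obs (fst x) \<pi>) ob) \<partial>count_space UNIV))"
    by (subst nn_integral_sum) (auto simp: nn_integral_cmult ennreal_mult)
  also have "\<dots> = ennreal (wt \<nu> \<phi>)" by (simp add: nn_integral_pmf_1 wt_eq[OF p])
  finally show ?thesis .
qed

lemma int_mt: "\<nu> \<in> KK \<Longrightarrow> (\<integral>\<^sup>+ ob. ennreal (mt \<nu> \<pi> ob) \<partial>count_space UNIV) = 1"
proof -
  assume n: "\<nu> \<in> KK"
  have "(\<integral>\<^sup>+ ob. ennreal (mt \<nu> \<pi> ob) \<partial>count_space UNIV)
      = (\<integral>\<^sup>+ ob. (\<Sum>\<phi>\<in>Phi. ennreal (mc \<nu> \<pi> \<phi> ob)) \<partial>count_space UNIV)"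
    unfolding mt_def by (intro nn_integral_cong) (subst sum_ennreal, auto simp: mc_nn)
  also have "\<dots> = (\<Sum>\<phi>\<in>Phi. ennreal (wt \<nu> \<phi>))" by (subst nn_integral_sum) (auto simp: int_mc)
  also have "\<dots> = 1" using wt_total[OF n] by simp
  finally show ?thesis .
qed

lemma mt_pmf: "\<nu> \<in> KK \<Longrightarrow> mt \<nu> \<pi> ob = pmf (mix Obs (map_pmf fst \<nu>) \<pi>) ob"
proof -
  assume n: "\<nu> \<in> KK"
  have "pmf (mix Obs (map_pmf fst \<nu>) \<pi>) ob = (\<integral>x. pmf (Obs (fst x) \<pi>) ob \<partial>measure_pmf \<nu>)"
    unfolding mix_def bind_map_pmf pmf_bind by simp
  also have "\<dots> = (\<Sum>x\<in>Psi Phi. pmf \<nu> x * pmf (Obs (fst x) \<pi>) ob)"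
    using n finPsi unfolding KK_def by (subst integral_measure_pmf[of "Psi Phi"]) auto
  also have "\<dots> = mt \<nu> \<pi> ob" unfolding mt_def mc_def by (rule sum_Psi)
  finally show ?thesis by simp
qed

lemma cond_set: "wt \<nu> \<phi> > 0 \<Longrightarrow> set_pmf \<nu> \<inter> \<phi> \<noteq> {}"
  using measure_pmf_zero_iff[of \<nu> \<phi>] by auto

lemma cond_mix: "\<phi> \<in> Phi \<Longrightarrow> wt \<nu> \<phi> > 0 \<Longrightarrow>
   pmf (mix Obs (map_pmf fst (cond_pmf \<nu> \<phi>)) \<pi>) ob = mc \<nu> \<pi> \<phi> ob / wt \<nu> \<phi>"
proof -
  assume p: "\<phi> \<in> Phi" and w: "wt \<nu> \<phi> > 0"
  note ne = cond_set[OF w]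
  have "pmf (mix Obs (map_pmf fst (cond_pmf \<nu> \<phi>)) \<pi>) ob = (\<integral>x. pmf (Obs (fst x) \<pi>) ob \<partial>measure_pmf (cond_pmf \<nu> \<phi>))"
    unfolding mix_def bind_map_pmf pmf_bind by simp
  also have "\<dots> = (\<Sum>x\<in>\<phi>. pmf (cond_pmf \<nu> \<phi>) x * pmf (Obs (fst x) \<pi>) ob)"
    using finCell[OF p] set_cond_pmf[OF ne] by (subst integral_measure_pmf[of \<phi>]) auto
  also have "\<dots> = (\<Sum>x\<in>\<phi>. pmf \<nu> x * pmf (Obs (fst x) \<pi>) ob / wt \<nu> \<phi>)"
    using pmf_cond[OF ne] by (intro sum.cong) auto
  also have "\<dots> = mc \<nu> \<pi> \<phi> ob / wt \<nu> \<phi>" unfolding mc_def by (simp add: sum_divide_distrib)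
  finally show ?thesis .
qed

lemma cond_exp: "\<phi> \<in> Phi \<Longrightarrow> wt \<nu> \<phi> > 0 \<Longrightarrow>
   wt \<nu> \<phi> * measure_pmf.expectation (cond_pmf \<nu> \<phi>) h = (\<Sum>x\<in>\<phi>. pmf \<nu> x * h x)"
proof -
  assume p: "\<phi> \<in> Phi" and w: "wt \<nu> \<phi> > 0"
  note ne = cond_set[OF w]
  have "measure_pmf.expectation (cond_pmf \<nu> \<phi>) h = (\<Sum>x\<in>\<phi>. pmf (cond_pmf \<nu> \<phi>) x * h x)"
    using finCell[OF p] set_cond_pmf[OF ne] by (subst integral_measure_pmf[of \<phi>]) auto
  also have "\<dots> = (\<Sum>x\<in>\<phi>. pmf \<nu> x * h x) / wt \<nu> \<phi>"
    using pmf_cond[OF ne] by (simp add: sum_divide_distrib)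
  finally show ?thesis using w by simp
qed

end



lemma nn_integral_count_ge_point: "f y \<le> (\<integral>\<^sup>+ x. f x \<partial>count_space UNIV)"
proof -
  have "(\<integral>\<^sup>+ x. f x * indicator {y} x \<partial>count_space UNIV) \<le> (\<integral>\<^sup>+ x. f x \<partial>count_space UNIV)"
    by (intro nn_integral_mono) (auto split: split_indicator)
  then show ?thesis by simp
qed

lemma persp_swap:
  assumes "0 \<le> a" "a \<le> m" "0 \<le> w" "w = 0 \<longrightarrow> a = 0"
  shows "persp w a m = persp m a w"
proof (cases "a = 0")
  case True then show ?thesis using assms by (simp add: persp_def kl_term_def ennreal_mult'[symmetric] mult.commute)
next
  case False
  then have a: "a > 0" "m > 0" "w > 0" using assms by auto
  have "persp w a m = ennreal (Fr w a m)" using assms a by (intro persp_pos) auto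
  also have "Fr w a m = Fr m a w" unfolding Fr_def by (simp add: mult.commute)
  also have "ennreal (Fr m a w) = persp m a w" using assms a by (intro persp_pos[symmetric]) auto
  finally show ?thesis .
qed

lemma gibbs_pt:
  assumes "finite I" "\<And>i. i \<in> I \<Longrightarrow> 0 \<le> a i" "\<And>i. i \<in> I \<Longrightarrow> 0 \<le> w i"
    "\<And>i. i \<in> I \<Longrightarrow> w i = 0 \<longrightarrow> a i = 0" "(\<Sum>i\<in>I. w i) = 1" "0 \<le> q" "m = (\<Sum>i\<in>I. a i)"
  shows "(\<Sum>i\<in>I. persp (w i) (a i) m) \<le> (\<Sum>i\<in>I. persp (w i) (a i) q)"
proof (cases "m = 0")
  case True
  then have "\<forall>i\<in>I. a i = 0" using assms by (simp add: sum_nonneg_eq_0_iff)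
  then show ?thesis using True by (simp add: persp_def kl_term_def)
next
  case m: False
  have "m \<ge> 0" using assms(2,7) by (simp add: sum_nonneg)
  then have m0: "m > 0" using m by linarith
  obtain j where j: "j \<in> I" "a j > 0" using m assms(2,7) by (metis less_eq_real_def sum.neutral)
  show ?thesis
  proof (cases "q = 0")
    case True
    have "persp (w j) (a j) q = \<infinity>" using persp_zero_q[of "w j" "a j"] j assms True by auto
    then have "(\<Sum>i\<in>I. persp (w i) (a i) q) = \<infinity>" using j assms(1)
      using ennreal_sum_eq_top[OF assms(1), of "\<lambda>i. persp (w i) (a i) q"] by auto
    then show ?thesis by simp
  next
    case False
    then have q0: "q > 0" using assms by auto
    have e1: "(\<Sum>i\<in>I. persp (w i) (a i) m) = ennreal (\<Sum>i\<in>I. Fr (w i) (a i) m)"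
    proof -
      have "(\<Sum>i\<in>I. persp (w i) (a i) m) = (\<Sum>i\<in>I. ennreal (Fr (w i) (a i) m))"
        using assms m0 by (intro sum.cong refl persp_pos) auto
      also have "\<dots> = ennreal (\<Sum>i\<in>I. Fr (w i) (a i) m)"
        using assms m0 Fr_nonneg by (intro sum_ennreal) auto
      finally show ?thesis .
    qed
    have e2: "(\<Sum>i\<in>I. persp (w i) (a i) q) = ennreal (\<Sum>i\<in>I. Fr (w i) (a i) q)"
    proof -
      have "(\<Sum>i\<in>I. persp (w i) (a i) q) = (\<Sum>i\<in>I. ennreal (Fr (w i) (a i) q))"
        using assms q0 by (intro sum.cong refl persp_pos) auto
      also have "\<dots> = ennreal (\<Sum>i\<in>I. Fr (w i) (a i) q)"
        using assms q0 Fr_nonneg by (intro sum_ennreal) auto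
      finally show ?thesis .
    qed
    have pt: "Fr (w i) (a i) m = Fr (w i) (a i) q + a i * ln (q / m) + w i * (m - q)" if i: "i \<in> I" for i
    proof (cases "a i = 0")
      case True then show ?thesis unfolding Fr_def Lg_def by (simp add: algebra_simps)
    next
      case False
      then have "a i > 0" "w i > 0" using assms i by force+
      then have "ln (a i / (w i * m)) = ln (a i / (w i * q)) + ln (q / m)" using m0 q0
        by (simp add: ln_div ln_mult)
      then show ?thesis using False unfolding Fr_def Lg_def by (simp add: algebra_simps)
    qed
    have "(\<Sum>i\<in>I. Fr (w i) (a i) m) = (\<Sum>i\<in>I. Fr (w i) (a i) q) + m * ln (q / m) + (m - q)"
      using pt assms(5,7) by (simp add: sum.distrib sum_distrib_right[symmetric] sum_distrib_left[symmetric])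
    moreover have "m * ln (q / m) \<le> q - m"
    proof -
      have "ln (q / m) \<le> q / m - 1" using q0 m0 by (intro ln_le_minus_one) auto
      then have "m * ln (q / m) \<le> m * (q / m - 1)" using m0 by (intro mult_left_mono) auto
      also have "\<dots> = q - m" using m0 by (simp add: field_simps)
      finally show ?thesis .
    qed
    ultimately show ?thesis unfolding e1 e2 by (intro ennreal_leI) linarith
  qed
qed



lemma ennreal_cancelc: "(x::ennreal) + ennreal c \<le> y + ennreal c \<Longrightarrow> x \<le> y"
proof -
  assume h: "x + ennreal c \<le> y + ennreal c"
  have "ennreal c + x \<le> ennreal c + y" using h by (simp only: add.commute)
  then show ?thesis using ennreal_add_left_cancel_le[of "ennreal c" x y] by simp
qed

lemma int_cmult: "0 \<le> k \<Longrightarrow> (\<And>x. 0 \<le> f x) \<Longrightarrow>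
  (\<integral>\<^sup>+ x. ennreal (k * f x) \<partial>count_space UNIV) = ennreal k * (\<integral>\<^sup>+ x. ennreal (f x) \<partial>count_space UNIV)"
  by (simp add: ennreal_mult nn_integral_cmult)

lemma int_cmult2: "0 \<le> k \<Longrightarrow> (\<And>x. 0 \<le> f x) \<Longrightarrow>
  (\<integral>\<^sup>+ x. ennreal (f x * k) \<partial>count_space UNIV) = ennreal k * (\<integral>\<^sup>+ x. ennreal (f x) \<partial>count_space UNIV)"
  using int_cmult[of k f] by (simp add: mult.commute)

lemma gibbs_int:
  fixes a m :: "'o \<Rightarrow> real" and w r :: real
  assumes a0: "\<And>z. 0 \<le> a z" and am: "\<And>z. a z \<le> m z"
    and ia: "(\<integral>\<^sup>+ z. ennreal (a z) \<partial>count_space UNIV) = ennreal w"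
    and im: "(\<integral>\<^sup>+ z. ennreal (m z) \<partial>count_space UNIV) = 1"
    and w0: "0 \<le> w" and r0: "0 \<le> r" and wz: "w = 0 \<Longrightarrow> (\<forall>z. a z = 0)"
  shows "(\<integral>\<^sup>+ z. persp w (a z) (m z) \<partial>count_space UNIV) \<le> (\<integral>\<^sup>+ z. persp (m z) (a z) r \<partial>count_space UNIV)"
proof (cases "w = 0")
  case True
  then have "\<And>z. persp w (a z) (m z) = 0" using wz by (simp add: persp_def)
  then show ?thesis by simp
next
  case False
  then have wp: "w > 0" using w0 by auto
  have m0: "\<And>z. 0 \<le> m z" using a0 am order_trans by blast
  have mz: "\<And>z. m z = 0 \<longrightarrow> a z = 0" using a0 am by (metis order_antisym)
  have sw: "\<And>z. persp w (a z) (m z) = persp (m z) (a z) w"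
    using a0 am wp by (intro persp_swap) auto
  show ?thesis
  proof (cases "r = 0")
    case True
    have "\<exists>z. a z > 0"
    proof (rule ccontr)
      assume "\<not> (\<exists>z. a z > 0)"
      then have "\<And>z. a z \<le> 0" by (simp add: not_less)
      then have "\<And>z. a z = 0" using a0 by (meson order_antisym)
      then have "(\<integral>\<^sup>+ z. ennreal (a z) \<partial>count_space UNIV) = 0" by simp
      then show False using ia wp by simp
    qed
    then obtain o0 where o0: "a o0 > 0" by blast
    have "persp (m o0) (a o0) r = \<infinity>" using True o0 persp_zero_q[OF m0 a0 mz] by auto
    then have "(\<integral>\<^sup>+ z. persp (m z) (a z) r \<partial>count_space UNIV) = \<infinity>"
      using nn_integral_count_ge_point[of "\<lambda>z. persp (m z) (a z) r" o0] by (simp add: top_unique)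
    then show ?thesis by simp
  next
    case False
    then have rp: "r > 0" using r0 by auto
    define c where "c = ln (w / r)"
    have Lgid: "Lg (a z) (m z * r) = Lg (a z) (m z * w) + a z * c" for z
    proof (cases "a z = 0")
      case True then show ?thesis by (simp add: Lg_def)
    next
      case False
      then have az: "a z > 0" using a0[of z] by linarith
      then have "a z > 0" "m z > 0" using am[of z] by linarith+
      then have "ln (a z / (m z * r)) = ln (a z / (m z * w)) + c" unfolding c_def using wp rp
        by (simp add: ln_div ln_mult)
      then show ?thesis using False by (simp add: Lg_def algebra_simps)
    qed
    have Pr: "\<And>z. persp (m z) (a z) r = ennreal (Fr (m z) (a z) r)" using m0 a0 mz rp by (intro persp_pos) auto
    have Pw: "\<And>z. persp (m z) (a z) w = ennreal (Fr (m z) (a z) w)" using m0 a0 mz wp by (intro persp_pos) auto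
    have Fr_r: "\<And>z. 0 \<le> Fr (m z) (a z) r" using m0 a0 mz rp by (intro Fr_nonneg) auto
    have Fr_w: "\<And>z. 0 \<le> Fr (m z) (a z) w" using m0 a0 mz wp by (intro Fr_nonneg) auto
    have kl: "0 \<le> w * c + r - w" unfolding c_def using klr_nonneg[OF wp rp] by simp
    let ?Ir = "(\<integral>\<^sup>+ z. persp (m z) (a z) r \<partial>count_space UNIV)"
    let ?Iw = "(\<integral>\<^sup>+ z. persp (m z) (a z) w \<partial>count_space UNIV)"
    show ?thesis
    proof (cases "c \<ge> 0")
      case True
      have pt: "persp (m z) (a z) r + ennreal (m z * w) = persp (m z) (a z) w + ennreal (a z * c) + ennreal (m z * r)" for z
      proof -
        have "Fr (m z) (a z) r + m z * w = Fr (m z) (a z) w + a z * c + m z * r"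
          unfolding Fr_def using Lgid[of z] by (simp add: algebra_simps)
        then show ?thesis unfolding Pr Pw using Fr_r[of z] Fr_w[of z] True a0[of z] m0[of z] wp rp
          by (simp add: ennreal_plus[symmetric] del: ennreal_plus)
      qed
      have "?Ir + ennreal w = (\<integral>\<^sup>+ z. persp (m z) (a z) r + ennreal (m z * w) \<partial>count_space UNIV)"
        using int_cmult2[of w m] m0 wp im by (subst nn_integral_add) auto
      also have "\<dots> = (\<integral>\<^sup>+ z. persp (m z) (a z) w + ennreal (a z * c) + ennreal (m z * r) \<partial>count_space UNIV)"
        using pt by simp
      also have "\<dots> = ?Iw + ennreal (w * c + r)"
        using int_cmult2[of r m] int_cmult2[of c a] m0 a0 rp True im ia wp
        by (simp add: nn_integral_add ennreal_mult'[symmetric] mult.commute ennreal_plus[symmetric] del: ennreal_plus)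
      finally have e: "?Ir + ennreal w = ?Iw + ennreal (w * c + r)" .
      have "?Iw + ennreal w \<le> ?Iw + ennreal (w * c + r)" using kl by (intro add_left_mono ennreal_leI) linarith
      then have "?Iw + ennreal w \<le> ?Ir + ennreal w" unfolding e .
      then show ?thesis unfolding sw by (rule ennreal_cancelc)
    next
      case False
      have pt: "persp (m z) (a z) r + ennreal (m z * w) + ennreal (a z * (- c)) = persp (m z) (a z) w + ennreal (m z * r)" for z
      proof -
        have "Fr (m z) (a z) r + m z * w + a z * (- c) = Fr (m z) (a z) w + m z * r"
          unfolding Fr_def using Lgid[of z] by (simp add: algebra_simps)
        note eq = this
        have n1: "0 \<le> m z * w" "0 \<le> a z * (- c)" "0 \<le> m z * r"
          using False a0[of z] m0[of z] wp rp by (auto simp: mult_nonneg_nonpos)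
        have "ennreal (Fr (m z) (a z) r) + ennreal (m z * w) + ennreal (a z * (- c))
            = ennreal (Fr (m z) (a z) r + m z * w + a z * (- c))"
          using n1 Fr_r[of z] by (simp add: ennreal_plus[symmetric] del: ennreal_plus)
        also have "\<dots> = ennreal (Fr (m z) (a z) w + m z * r)" using eq by simp
        also have "\<dots> = ennreal (Fr (m z) (a z) w) + ennreal (m z * r)" using n1 Fr_w[of z] by simp
        finally show ?thesis unfolding Pr Pw .
      qed
      have ew: "ennreal (w - c * w) = ennreal w + ennreal (- (c * w))"
        using False wp by (simp add: ennreal_plus[symmetric] mult_nonpos_nonneg del: ennreal_plus)
      have "?Ir + ennreal (w - w * c) = (\<integral>\<^sup>+ z. persp (m z) (a z) r + ennreal (m z * w) + ennreal (a z * (- c)) \<partial>count_space UNIV)"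
        using int_cmult2[of w m] int_cmult2[of "-c" a] m0 a0 wp im ia False
        by (simp add: ew nn_integral_add ennreal_mult'[symmetric] mult.commute ennreal_plus[symmetric] add.assoc del: ennreal_plus)
      also have "\<dots> = (\<integral>\<^sup>+ z. persp (m z) (a z) w + ennreal (m z * r) \<partial>count_space UNIV)"
        using pt by simp
      also have "\<dots> = ?Iw + ennreal r"
        using int_cmult2[of r m] m0 rp im by (simp add: nn_integral_add)
      finally have e: "?Ir + ennreal (w - w * c) = ?Iw + ennreal r" .
      have "?Ir + ennreal (w - w * c) \<le> ?Ir + ennreal r" using kl by (intro add_left_mono ennreal_leI) linarith
      then have "?Iw + ennreal r \<le> ?Ir + ennreal r" unfolding e .
      then show ?thesis unfolding sw by (rule ennreal_cancelc)
    qed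
  qed
qed



context setting begin

definition gapx where "gapx \<pi> x = V (fst x) (snd x) - V (fst x) \<pi>"
definition G where "G \<nu> \<pi> = (\<Sum>x\<in>Psi Phi. pmf \<nu> x * gapx \<pi> x)"
definition SA where "SA \<rho> \<nu> \<pi> = (\<Sum>x\<in>Psi Phi. ennreal (pmf \<nu> x) *
   (\<integral>\<^sup>+ ob. KLf (post Obs Phi \<nu> \<pi> ob) (pmf \<rho>) \<partial>measure_pmf (Obs (fst x) \<pi>)))"
definition SD where "SD \<mu> \<nu> \<pi> = (\<Sum>\<phi>\<in>Phi. ennreal (wt \<nu> \<phi>) *
   KL (mix Obs (map_pmf fst (cond_pmf \<nu> \<phi>)) \<pi>) (mix Obs \<mu> \<pi>))"
definition aI where "aI \<rho> \<nu> \<pi> = ereal (G \<nu> \<pi>) - enn2ereal (ennreal (1 / \<eta>) * SA \<rho> \<nu> \<pi>)"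
definition dI where "dI \<mu> \<nu> \<pi> = ereal (G \<nu> \<pi>) - enn2ereal (ennreal (1 / \<eta>) * SD \<mu> \<nu> \<pi>)"

lemma AIR_eq: "AIR Obs V Pis Phi \<rho> \<eta> p \<nu> = (\<Sum>\<pi>\<in>Pis. ereal (pmf p \<pi>) * aI \<rho> \<nu> \<pi>)"
  unfolding AIR_def aI_def G_def SA_def gapx_def
  using finPsi eta by (subst ereal_lin_form) auto

lemma G_cells: "\<nu> \<in> KK \<Longrightarrow> (\<Sum>\<phi>\<in>Phi. wt \<nu> \<phi> * measure_pmf.expectation (cond_pmf \<nu> \<phi>) (\<lambda>x. gapx \<pi> x)) = G \<nu> \<pi>"
proof -
  assume n: "\<nu> \<in> KK"
  have "(\<Sum>\<phi>\<in>Phi. wt \<nu> \<phi> * measure_pmf.expectation (cond_pmf \<nu> \<phi>) (\<lambda>x. gapx \<pi> x))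
      = (\<Sum>\<phi>\<in>Phi. \<Sum>x\<in>\<phi>. pmf \<nu> x * gapx \<pi> x)"
  proof (intro sum.cong refl)
    fix \<phi> assume p: "\<phi> \<in> Phi"
    show "wt \<nu> \<phi> * measure_pmf.expectation (cond_pmf \<nu> \<phi>) (\<lambda>x. gapx \<pi> x) = (\<Sum>x\<in>\<phi>. pmf \<nu> x * gapx \<pi> x)"
    proof (cases "wt \<nu> \<phi> = 0")
      case True
      then have "\<forall>x\<in>\<phi>. pmf \<nu> x = 0" using wt_eq[OF p] finCell[OF p] by (simp add: sum_nonneg_eq_0_iff)
      then show ?thesis using True by simp
    next
      case False
      then have "wt \<nu> \<phi> > 0" by (simp add: less_le)
      then show ?thesis by (rule cond_exp[OF p])
    qed
  qed
  also have "\<dots> = G \<nu> \<pi>" unfolding G_def by (rule sum_Psi[symmetric])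
  finally show ?thesis .
qed

lemma DEC_eq: "\<nu> \<in> KK \<Longrightarrow> DEC_obj Obs V Pis Phi \<eta> \<mu> p \<nu> = (\<Sum>\<pi>\<in>Pis. ereal (pmf p \<pi>) * dI \<mu> \<nu> \<pi>)"
proof -
  assume n: "\<nu> \<in> KK"
  show ?thesis
    unfolding DEC_obj_def dI_def SD_def
    using finPhi eta G_cells[OF n] by (subst ereal_lin_form) (auto simp: gapx_def)
qed

lemma SD_persp: "\<nu> \<in> KK \<Longrightarrow> SD \<mu> \<nu> \<pi> =
  (\<Sum>\<phi>\<in>Phi. \<integral>\<^sup>+ ob. persp (wt \<nu> \<phi>) (mc \<nu> \<pi> \<phi> ob) (pmf (mix Obs \<mu> \<pi>) ob) \<partial>count_space UNIV)"
  unfolding SD_def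
proof (intro sum.cong refl)
  fix \<phi> assume p: "\<phi> \<in> Phi"
  show "ennreal (wt \<nu> \<phi>) * KL (mix Obs (map_pmf fst (cond_pmf \<nu> \<phi>)) \<pi>) (mix Obs \<mu> \<pi>) =
    (\<integral>\<^sup>+ ob. persp (wt \<nu> \<phi>) (mc \<nu> \<pi> \<phi> ob) (pmf (mix Obs \<mu> \<pi>) ob) \<partial>count_space UNIV)"
  proof (cases "wt \<nu> \<phi> = 0")
    case True
    then show ?thesis by (simp add: persp_def)
  next
    case False
    then have w: "wt \<nu> \<phi> > 0" by (simp add: less_le)
    show ?thesis unfolding KL_def KLf_def persp_def cond_mix[OF p w]
      by (subst nn_integral_cmult) auto
  qed
qed

lemma post_in: "\<phi> \<in> Phi \<Longrightarrow> post Obs Phi \<nu> \<pi> ob \<phi> = mc \<nu> \<pi> \<phi> ob / mt \<nu> \<pi> ob"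
  unfolding post_def mc_def mt_def by simp

lemma KLf_post: "set_pmf \<rho> \<subseteq> Phi \<Longrightarrow>
  KLf (post Obs Phi \<nu> \<pi> ob) (pmf \<rho>) = (\<Sum>\<phi>\<in>Phi. kl_term (mc \<nu> \<pi> \<phi> ob / mt \<nu> \<pi> ob) (pmf \<rho> \<phi>))"
proof -
  assume r: "set_pmf \<rho> \<subseteq> Phi"
  have "KLf (post Obs Phi \<nu> \<pi> ob) (pmf \<rho>) = (\<Sum>\<phi>\<in>Phi. kl_term (post Obs Phi \<nu> \<pi> ob \<phi>) (pmf \<rho> \<phi>))"
    unfolding KLf_def
  proof (rule nn_integral_count_space'[OF finPhi])
    fix \<phi> assume "\<phi> \<notin> Phi"
    then have "post Obs Phi \<nu> \<pi> ob \<phi> = 0" "pmf \<rho> \<phi> = 0" using r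
      by (auto simp: post_def set_pmf_eq)
    then show "kl_term (post Obs Phi \<nu> \<pi> ob \<phi>) (pmf \<rho> \<phi>) = 0" by (simp add: kl_term_def)
  qed auto
  also have "\<dots> = (\<Sum>\<phi>\<in>Phi. kl_term (mc \<nu> \<pi> \<phi> ob / mt \<nu> \<pi> ob) (pmf \<rho> \<phi>))"
    by (intro sum.cong refl) (simp add: post_in)
  finally show ?thesis .
qed

lemma SA_persp: "\<nu> \<in> KK \<Longrightarrow> set_pmf \<rho> \<subseteq> Phi \<Longrightarrow> SA \<rho> \<nu> \<pi> =
  (\<Sum>\<phi>\<in>Phi. \<integral>\<^sup>+ ob. persp (mt \<nu> \<pi> ob) (mc \<nu> \<pi> \<phi> ob) (pmf \<rho> \<phi>) \<partial>count_space UNIV)"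
proof -
  assume n: "\<nu> \<in> KK" and r: "set_pmf \<rho> \<subseteq> Phi"
  define K where "K ob = KLf (post Obs Phi \<nu> \<pi> ob) (pmf \<rho>)" for ob
  have "SA \<rho> \<nu> \<pi> = (\<Sum>x\<in>Psi Phi. \<integral>\<^sup>+ ob. ennreal (pmf \<nu> x * pmf (Obs (fst x) \<pi>) ob) * K ob \<partial>count_space UNIV)"
    unfolding SA_def K_def nn_integral_measure_pmf
    by (intro sum.cong refl, subst nn_integral_cmult[symmetric]) (auto simp: ennreal_mult mult.assoc)
  also have "\<dots> = (\<integral>\<^sup>+ ob. (\<Sum>x\<in>Psi Phi. ennreal (pmf \<nu> x * pmf (Obs (fst x) \<pi>) ob) * K ob) \<partial>count_space UNIV)"
    by (subst nn_integral_sum) auto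
  also have "\<dots> = (\<integral>\<^sup>+ ob. ennreal (mt \<nu> \<pi> ob) * K ob \<partial>count_space UNIV)"
  proof (intro nn_integral_cong)
    fix ob
    have "(\<Sum>x\<in>Psi Phi. ennreal (pmf \<nu> x * pmf (Obs (fst x) \<pi>) ob)) = ennreal (\<Sum>x\<in>Psi Phi. pmf \<nu> x * pmf (Obs (fst x) \<pi>) ob)"
      by (rule sum_ennreal) auto
    also have "(\<Sum>x\<in>Psi Phi. pmf \<nu> x * pmf (Obs (fst x) \<pi>) ob) = mt \<nu> \<pi> ob"
      unfolding mt_def mc_def by (rule sum_Psi)
    finally show "(\<Sum>x\<in>Psi Phi. ennreal (pmf \<nu> x * pmf (Obs (fst x) \<pi>) ob) * K ob) = ennreal (mt \<nu> \<pi> ob) * K ob"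
      by (simp only: sum_distrib_right[symmetric])
  qed
  also have "\<dots> = (\<integral>\<^sup>+ ob. (\<Sum>\<phi>\<in>Phi. persp (mt \<nu> \<pi> ob) (mc \<nu> \<pi> \<phi> ob) (pmf \<rho> \<phi>)) \<partial>count_space UNIV)"
    unfolding K_def KLf_post[OF r] persp_def by (simp add: sum_distrib_left)
  also have "\<dots> = (\<Sum>\<phi>\<in>Phi. \<integral>\<^sup>+ ob. persp (mt \<nu> \<pi> ob) (mc \<nu> \<pi> \<phi> ob) (pmf \<rho> \<phi>) \<partial>count_space UNIV)"
    by (subst nn_integral_sum) auto
  finally show ?thesis .
qed

lemma A1: "\<nu> \<in> KK \<Longrightarrow> set_pmf \<rho> \<subseteq> Phi \<Longrightarrow> SD (map_pmf fst \<nu>) \<nu> \<pi> \<le> SA \<rho> \<nu> \<pi>"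
proof -
  assume n: "\<nu> \<in> KK" and r: "set_pmf \<rho> \<subseteq> Phi"
  show ?thesis unfolding SD_persp[OF n] SA_persp[OF n r] mt_pmf[OF n, symmetric]
  proof (intro sum_mono)
    fix \<phi> assume p: "\<phi> \<in> Phi"
    show "(\<integral>\<^sup>+ ob. persp (wt \<nu> \<phi>) (mc \<nu> \<pi> \<phi> ob) (mt \<nu> \<pi> ob) \<partial>count_space UNIV)
        \<le> (\<integral>\<^sup>+ ob. persp (mt \<nu> \<pi> ob) (mc \<nu> \<pi> \<phi> ob) (pmf \<rho> \<phi>) \<partial>count_space UNIV)"
      by (rule gibbs_int) (auto simp: mc_nn mc_le_mt[OF p] int_mc[OF p] int_mt[OF n] mc_zero[OF p])
  qed
qed

definition cellof where "cellof x = (THE \<phi>. \<phi> \<in> Phi \<and> x \<in> \<phi>)"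
definition cellpmf where "cellpmf \<nu> = map_pmf cellof \<nu>"

lemma cellof_eq: "\<phi> \<in> Phi \<Longrightarrow> x \<in> \<phi> \<Longrightarrow> cellof x = \<phi>"
  unfolding cellof_def using disj by (intro the_equality) auto

lemma cellpmf_set: "\<nu> \<in> KK \<Longrightarrow> set_pmf (cellpmf \<nu>) \<subseteq> Phi"
  unfolding cellpmf_def KK_def Psi_def by (auto simp: cellof_eq)

lemma cellpmf_pmf: "\<nu> \<in> KK \<Longrightarrow> \<phi> \<in> Phi \<Longrightarrow> pmf (cellpmf \<nu>) \<phi> = wt \<nu> \<phi>"
proof -
  assume n: "\<nu> \<in> KK" and p: "\<phi> \<in> Phi"
  have "pmf (cellpmf \<nu>) \<phi> = measure_pmf.prob \<nu> (cellof -` {\<phi>})" unfolding cellpmf_def pmf_map ..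
  also have "\<dots> = measure_pmf.prob \<nu> (cellof -` {\<phi>} \<inter> set_pmf \<nu>)" by (simp add: measure_Int_set_pmf)
  also have "cellof -` {\<phi>} \<inter> set_pmf \<nu> = \<phi> \<inter> set_pmf \<nu>"
  proof
    show "cellof -` {\<phi>} \<inter> set_pmf \<nu> \<subseteq> \<phi> \<inter> set_pmf \<nu>"
    proof
      fix x assume x: "x \<in> cellof -` {\<phi>} \<inter> set_pmf \<nu>"
      then obtain \<phi>' where "\<phi>' \<in> Phi" "x \<in> \<phi>'" using n unfolding KK_def Psi_def by auto
      then show "x \<in> \<phi> \<inter> set_pmf \<nu>" using x cellof_eq by auto
    qed
  qed (auto simp: cellof_eq[OF p])
  also have "measure_pmf.prob \<nu> (\<phi> \<inter> set_pmf \<nu>) = wt \<nu> \<phi>" by (simp add: measure_Int_set_pmf)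
  finally show ?thesis .
qed

lemma A2: "\<nu> \<in> KK \<Longrightarrow> SA (cellpmf \<nu>) \<nu> \<pi> \<le> SD \<mu> \<nu> \<pi>"
proof -
  assume n: "\<nu> \<in> KK"
  have "SA (cellpmf \<nu>) \<nu> \<pi> = (\<Sum>\<phi>\<in>Phi. \<integral>\<^sup>+ ob. persp (wt \<nu> \<phi>) (mc \<nu> \<pi> \<phi> ob) (mt \<nu> \<pi> ob) \<partial>count_space UNIV)"
    unfolding SA_persp[OF n cellpmf_set[OF n]]
  proof (intro sum.cong refl nn_integral_cong)
    fix \<phi> ob assume p: "\<phi> \<in> Phi"
    show "persp (mt \<nu> \<pi> ob) (mc \<nu> \<pi> \<phi> ob) (pmf (cellpmf \<nu>) \<phi>) = persp (wt \<nu> \<phi>) (mc \<nu> \<pi> \<phi> ob) (mt \<nu> \<pi> ob)"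
      unfolding cellpmf_pmf[OF n p]
      by (rule persp_swap[symmetric]) (auto simp: mc_nn mc_le_mt[OF p] mc_zero[OF p])
  qed
  also have "\<dots> = (\<integral>\<^sup>+ ob. (\<Sum>\<phi>\<in>Phi. persp (wt \<nu> \<phi>) (mc \<nu> \<pi> \<phi> ob) (mt \<nu> \<pi> ob)) \<partial>count_space UNIV)"
    by (subst nn_integral_sum) auto
  also have "\<dots> \<le> (\<integral>\<^sup>+ ob. (\<Sum>\<phi>\<in>Phi. persp (wt \<nu> \<phi>) (mc \<nu> \<pi> \<phi> ob) (pmf (mix Obs \<mu> \<pi>) ob)) \<partial>count_space UNIV)"
  proof (intro nn_integral_mono)
    fix ob
    show "(\<Sum>\<phi>\<in>Phi. persp (wt \<nu> \<phi>) (mc \<nu> \<pi> \<phi> ob) (mt \<nu> \<pi> ob))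
       \<le> (\<Sum>\<phi>\<in>Phi. persp (wt \<nu> \<phi>) (mc \<nu> \<pi> \<phi> ob) (pmf (mix Obs \<mu> \<pi>) ob))"
      by (rule gibbs_pt[OF finPhi]) (auto simp: mc_nn mc_zero wt_total[OF n] mt_def)
  qed
  also have "\<dots> = SD \<mu> \<nu> \<pi>" unfolding SD_persp[OF n] by (subst nn_integral_sum) auto
  finally show ?thesis .
qed

end



context setting begin

definition mue where "mue \<epsilon> \<mu> = mixp \<epsilon> (pmf_of_set Ms) \<mu>"

lemma mue_set: "0 \<le> \<epsilon> \<Longrightarrow> \<epsilon> \<le> 1 \<Longrightarrow> set_pmf \<mu> \<subseteq> Ms \<Longrightarrow> set_pmf (mue \<epsilon> \<mu>) \<subseteq> Ms"
  unfolding mue_def using set_mixp[of \<epsilon> "pmf_of_set Ms" \<mu>] fMs neMs by auto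

lemma pmf_mix_fin: "set_pmf \<mu> \<subseteq> Ms \<Longrightarrow> pmf (mix Obs \<mu> \<pi>) ob = (\<Sum>M\<in>Ms. pmf \<mu> M * pmf (Obs M \<pi>) ob)"
  unfolding mix_def pmf_bind using fMs by (subst integral_measure_pmf[of Ms]) auto

lemma mue_pmf: "0 \<le> \<epsilon> \<Longrightarrow> \<epsilon> \<le> 1 \<Longrightarrow> set_pmf \<mu> \<subseteq> Ms \<Longrightarrow>
  pmf (mix Obs (mue \<epsilon> \<mu>) \<pi>) ob = \<epsilon> / card Ms * (\<Sum>M\<in>Ms. pmf (Obs M \<pi>) ob) + (1 - \<epsilon>) * pmf (mix Obs \<mu> \<pi>) ob"
proof -
  assume e: "0 \<le> \<epsilon>" "\<epsilon> \<le> 1" and m: "set_pmf \<mu> \<subseteq> Ms"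
  have "pmf (mix Obs (mue \<epsilon> \<mu>) \<pi>) ob = (\<Sum>M\<in>Ms. pmf (mue \<epsilon> \<mu>) M * pmf (Obs M \<pi>) ob)"
    by (rule pmf_mix_fin[OF mue_set[OF e m]])
  also have "\<dots> = (\<Sum>M\<in>Ms. \<epsilon> / card Ms * pmf (Obs M \<pi>) ob + (1 - \<epsilon>) * (pmf \<mu> M * pmf (Obs M \<pi>) ob))"
    unfolding mue_def pmf_mixp[OF e] using fMs neMs by (intro sum.cong refl) (auto simp: algebra_simps)
  also have "\<dots> = \<epsilon> / card Ms * (\<Sum>M\<in>Ms. pmf (Obs M \<pi>) ob) + (1 - \<epsilon>) * pmf (mix Obs \<mu> \<pi>) ob"
    by (simp add: sum.distrib sum_distrib_left pmf_mix_fin[OF m])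
  finally show ?thesis .
qed

lemma mue_lb1: "0 \<le> \<epsilon> \<Longrightarrow> \<epsilon> \<le> 1 \<Longrightarrow> set_pmf \<mu> \<subseteq> Ms \<Longrightarrow>
  (1 - \<epsilon>) * pmf (mix Obs \<mu> \<pi>) ob \<le> pmf (mix Obs (mue \<epsilon> \<mu>) \<pi>) ob"
  using mue_pmf[of \<epsilon> \<mu> \<pi> ob] by (simp add: sum_nonneg)

lemma mue_lb2: "0 \<le> \<epsilon> \<Longrightarrow> \<epsilon> \<le> 1 \<Longrightarrow> set_pmf \<mu> \<subseteq> Ms \<Longrightarrow> M0 \<in> Ms \<Longrightarrow>
  \<epsilon> / card Ms * pmf (Obs M0 \<pi>) ob \<le> pmf (mix Obs (mue \<epsilon> \<mu>) \<pi>) ob"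
proof -
  assume e: "0 \<le> \<epsilon>" "\<epsilon> \<le> 1" and m: "set_pmf \<mu> \<subseteq> Ms" and M0: "M0 \<in> Ms"
  have "pmf (Obs M0 \<pi>) ob \<le> (\<Sum>M\<in>Ms. pmf (Obs M \<pi>) ob)" using fMs M0 by (intro member_le_sum) auto
  then have "\<epsilon> / card Ms * pmf (Obs M0 \<pi>) ob \<le> \<epsilon> / card Ms * (\<Sum>M\<in>Ms. pmf (Obs M \<pi>) ob)"
    using e by (intro mult_left_mono) auto
  moreover have "0 \<le> (1 - \<epsilon>) * pmf (mix Obs \<mu> \<pi>) ob" using e by auto
  ultimately show ?thesis using mue_pmf[OF e m, of \<pi> ob] by linarith
qed

lemma SD_shift: "\<nu> \<in> KK \<Longrightarrow> 0 < \<epsilon> \<Longrightarrow> \<epsilon> < 1 \<Longrightarrow> set_pmf \<mu> \<subseteq> Ms \<Longrightarrow>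
   SD (mue \<epsilon> \<mu>) \<nu> \<pi> \<le> SD \<mu> \<nu> \<pi> + ennreal (ln (1 / (1 - \<epsilon>)))"
proof -
  assume n: "\<nu> \<in> KK" and e: "0 < \<epsilon>" "\<epsilon> < 1" and m: "set_pmf \<mu> \<subseteq> Ms"
  let ?L = "ennreal (ln (1 / (1 - \<epsilon>)))"
  have "SD (mue \<epsilon> \<mu>) \<nu> \<pi> \<le> (\<Sum>\<phi>\<in>Phi. ennreal (wt \<nu> \<phi>) *
      (KL (mix Obs (map_pmf fst (cond_pmf \<nu> \<phi>)) \<pi>) (mix Obs \<mu> \<pi>) + ?L))"
    unfolding SD_def using e mue_lb1[of \<epsilon> \<mu>] m
    by (intro sum_mono mult_left_mono KL_shift) auto
  also have "\<dots> = SD \<mu> \<nu> \<pi> + (\<Sum>\<phi>\<in>Phi. ennreal (wt \<nu> \<phi>) * ?L)"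
    unfolding SD_def by (simp add: distrib_left sum.distrib)
  also have "(\<Sum>\<phi>\<in>Phi. ennreal (wt \<nu> \<phi>) * ?L) = ?L"
    by (simp add: sum_distrib_right[symmetric] wt_total[OF n])
  finally show ?thesis .
qed

lemma SD_fin: "\<nu> \<in> KK \<Longrightarrow> 0 < \<epsilon> \<Longrightarrow> \<epsilon> \<le> 1 \<Longrightarrow> set_pmf \<mu> \<subseteq> Ms \<Longrightarrow> SD (mue \<epsilon> \<mu>) \<nu> \<pi> < \<infinity>"
proof -
  assume n: "\<nu> \<in> KK" and e: "0 < \<epsilon>" "\<epsilon> \<le> 1" and m: "set_pmf \<mu> \<subseteq> Ms"
  define C where "C = card Ms / \<epsilon>"
  have cM: "card Ms \<ge> 1" using fMs neMs by (simp add: Suc_leI card_gt_0_iff)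
  have C1: "1 \<le> C" unfolding C_def using e cM by (simp add: divide_simps)
  have "SD (mue \<epsilon> \<mu>) \<nu> \<pi> \<le> (\<Sum>\<phi>\<in>Phi. ennreal (wt \<nu> \<phi>) * ennreal (ln C))"
    unfolding SD_def
  proof (intro sum_mono)
    fix \<phi> assume p: "\<phi> \<in> Phi"
    show "ennreal (wt \<nu> \<phi>) * KL (mix Obs (map_pmf fst (cond_pmf \<nu> \<phi>)) \<pi>) (mix Obs (mue \<epsilon> \<mu>) \<pi>)
        \<le> ennreal (wt \<nu> \<phi>) * ennreal (ln C)"
    proof (cases "wt \<nu> \<phi> = 0")
      case True then show ?thesis by simp
    next
      case False
      then have w: "wt \<nu> \<phi> > 0" by (simp add: less_le)
      have "KL (mix Obs (map_pmf fst (cond_pmf \<nu> \<phi>)) \<pi>) (mix Obs (mue \<epsilon> \<mu>) \<pi>) \<le> ennreal (ln C)"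
      proof (rule KL_bound[OF C1])
        fix ob
        have le: "pmf (Obs (fst x) \<pi>) ob \<le> C * pmf (mix Obs (mue \<epsilon> \<mu>) \<pi>) ob" if x: "x \<in> \<phi>" for x
        proof -
          have "fst x \<in> Ms" using cells[OF p] x by auto
          then have "\<epsilon> / card Ms * pmf (Obs (fst x) \<pi>) ob \<le> pmf (mix Obs (mue \<epsilon> \<mu>) \<pi>) ob"
            using mue_lb2 e m by auto
          then have "C * (\<epsilon> / card Ms * pmf (Obs (fst x) \<pi>) ob) \<le> C * pmf (mix Obs (mue \<epsilon> \<mu>) \<pi>) ob"
            using C1 by (intro mult_left_mono) auto
          moreover have eq1: "C * (\<epsilon> / card Ms) = 1" unfolding C_def using e cM by simp
          moreover have "C * (\<epsilon> / card Ms * pmf (Obs (fst x) \<pi>) ob) = pmf (Obs (fst x) \<pi>) ob"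
            by (metis eq1 mult.assoc mult.left_neutral)
          ultimately show ?thesis by linarith
        qed
        have "mc \<nu> \<pi> \<phi> ob \<le> (\<Sum>x\<in>\<phi>. pmf \<nu> x * (C * pmf (mix Obs (mue \<epsilon> \<mu>) \<pi>) ob))"
          unfolding mc_def using le by (intro sum_mono mult_left_mono) auto
        also have "\<dots> = wt \<nu> \<phi> * (C * pmf (mix Obs (mue \<epsilon> \<mu>) \<pi>) ob)"
          by (simp add: wt_eq[OF p] sum_distrib_right)
        finally show "pmf (mix Obs (map_pmf fst (cond_pmf \<nu> \<phi>)) \<pi>) ob \<le> C * pmf (mix Obs (mue \<epsilon> \<mu>) \<pi>) ob"
          unfolding cond_mix[OF p w] using w by (simp add: divide_simps mult.commute)
      qed
      then show ?thesis by (intro mult_left_mono) auto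
    qed
  qed
  also have "\<dots> < \<infinity>" using finPhi by (simp add: ennreal_mult'[symmetric] less_top[symmetric])
  finally show ?thesis .
qed

end



context setting begin

lemma KK_mix: "\<nu>1 \<in> KK \<Longrightarrow> \<nu>2 \<in> KK \<Longrightarrow> 0 \<le> t \<Longrightarrow> t \<le> 1 \<Longrightarrow> mixp t \<nu>1 \<nu>2 \<in> KK"
  unfolding KK_def using set_mixp[of t \<nu>1 \<nu>2] by auto

lemma wt_mix:
  assumes p: "\<phi> \<in> Phi" and t: "0 \<le> t" "t \<le> 1"
  shows "wt (mixp t \<nu>1 \<nu>2) \<phi> = t * wt \<nu>1 \<phi> + (1 - t) * wt \<nu>2 \<phi>"
proof -
  have "(\<Sum>x\<in>\<phi>. pmf (mixp t \<nu>1 \<nu>2) x) = (\<Sum>x\<in>\<phi>. t * pmf \<nu>1 x + (1 - t) * pmf \<nu>2 x)"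
    by (intro sum.cong refl pmf_mixp[OF t])
  then show ?thesis unfolding wt_eq[OF p] by (simp add: sum.distrib sum_distrib_left)
qed

lemma mc_mix:
  assumes t: "0 \<le> t" "t \<le> 1"
  shows "mc (mixp t \<nu>1 \<nu>2) \<pi> \<phi> ob = t * mc \<nu>1 \<pi> \<phi> ob + (1 - t) * mc \<nu>2 \<pi> \<phi> ob"
proof -
  have "mc (mixp t \<nu>1 \<nu>2) \<pi> \<phi> ob = (\<Sum>x\<in>\<phi>. t * (pmf \<nu>1 x * pmf (Obs (fst x) \<pi>) ob) + (1 - t) * (pmf \<nu>2 x * pmf (Obs (fst x) \<pi>) ob))"
    unfolding mc_def by (intro sum.cong refl) (simp add: pmf_mixp[OF t] distrib_right)
  then show ?thesis unfolding mc_def by (simp add: sum.distrib sum_distrib_left)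
qed

lemma G_mix:
  assumes t: "0 \<le> t" "t \<le> 1"
  shows "G (mixp t \<nu>1 \<nu>2) \<pi> = t * G \<nu>1 \<pi> + (1 - t) * G \<nu>2 \<pi>"
proof -
  have "G (mixp t \<nu>1 \<nu>2) \<pi> = (\<Sum>x\<in>Psi Phi. t * (pmf \<nu>1 x * gapx \<pi> x) + (1 - t) * (pmf \<nu>2 x * gapx \<pi> x))"
    unfolding G_def by (intro sum.cong refl) (simp add: pmf_mixp[OF t] distrib_right)
  then show ?thesis unfolding G_def by (simp add: sum.distrib sum_distrib_left)
qed

lemma SD_convex:
  assumes n: "\<nu>1 \<in> KK" "\<nu>2 \<in> KK" and t: "0 \<le> t" "t \<le> 1"
  shows "SD \<mu> (mixp t \<nu>1 \<nu>2) \<pi> \<le> ennreal t * SD \<mu> \<nu>1 \<pi> + ennreal (1 - t) * SD \<mu> \<nu>2 \<pi>"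
proof -
  let ?q = "\<lambda>ob. pmf (mix Obs \<mu> \<pi>) ob"
  have "SD \<mu> (mixp t \<nu>1 \<nu>2) \<pi> = (\<Sum>\<phi>\<in>Phi. \<integral>\<^sup>+ ob. persp (t * wt \<nu>1 \<phi> + (1 - t) * wt \<nu>2 \<phi>)
      (t * mc \<nu>1 \<pi> \<phi> ob + (1 - t) * mc \<nu>2 \<pi> \<phi> ob) (?q ob) \<partial>count_space UNIV)"
    unfolding SD_persp[OF KK_mix[OF n t]]
    by (intro sum.cong refl nn_integral_cong) (simp add: wt_mix[OF _ t] mc_mix[OF t])
  also have "\<dots> \<le> (\<Sum>\<phi>\<in>Phi. \<integral>\<^sup>+ ob. ennreal t * persp (wt \<nu>1 \<phi>) (mc \<nu>1 \<pi> \<phi> ob) (?q ob)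
      + ennreal (1 - t) * persp (wt \<nu>2 \<phi>) (mc \<nu>2 \<pi> \<phi> ob) (?q ob) \<partial>count_space UNIV)"
  proof (intro sum_mono nn_integral_mono)
    fix \<phi> ob assume p: "\<phi> \<in> Phi"
    show "persp (t * wt \<nu>1 \<phi> + (1 - t) * wt \<nu>2 \<phi>) (t * mc \<nu>1 \<pi> \<phi> ob + (1 - t) * mc \<nu>2 \<pi> \<phi> ob) (?q ob)
      \<le> ennreal t * persp (wt \<nu>1 \<phi>) (mc \<nu>1 \<pi> \<phi> ob) (?q ob) + ennreal (1 - t) * persp (wt \<nu>2 \<phi>) (mc \<nu>2 \<pi> \<phi> ob) (?q ob)"
      by (rule persp_convex) (auto simp: t mc_nn mc_zero[OF p])
  qed
  also have "\<dots> = ennreal t * SD \<mu> \<nu>1 \<pi> + ennreal (1 - t) * SD \<mu> \<nu>2 \<pi>"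
    unfolding SD_persp[OF n(1)] SD_persp[OF n(2)] sum_distrib_left sum.distrib[symmetric]
    by (intro sum.cong refl) (simp add: nn_integral_add nn_integral_cmult)
  finally show ?thesis .
qed

definition gR where "gR \<mu> \<nu> \<pi> = G \<nu> \<pi> - (1 / \<eta>) * enn2real (SD \<mu> \<nu> \<pi>)"

lemma dI_real: "SD \<mu> \<nu> \<pi> < \<infinity> \<Longrightarrow> dI \<mu> \<nu> \<pi> = ereal (gR \<mu> \<nu> \<pi>)"
proof -
  assume f: "SD \<mu> \<nu> \<pi> < \<infinity>"
  then obtain s where s: "SD \<mu> \<nu> \<pi> = ennreal s" "0 \<le> s" by (cases "SD \<mu> \<nu> \<pi>" rule: ennreal_cases) auto
  have "ennreal (1 / \<eta>) * ennreal s = ennreal (1 / \<eta> * s)" by (subst ennreal_mult) (use eta s in auto)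
  then show ?thesis unfolding dI_def gR_def s using eta s by simp
qed

lemma gR_concave:
  assumes fin: "\<And>\<nu>. \<nu> \<in> KK \<Longrightarrow> SD \<mu> \<nu> \<pi> < \<infinity>"
    and n: "\<nu>1 \<in> KK" "\<nu>2 \<in> KK" and t: "0 \<le> t" "t \<le> 1"
  shows "t * gR \<mu> \<nu>1 \<pi> + (1 - t) * gR \<mu> \<nu>2 \<pi> \<le> gR \<mu> (mixp t \<nu>1 \<nu>2) \<pi>"
proof -
  obtain s1 where s1: "SD \<mu> \<nu>1 \<pi> = ennreal s1" "0 \<le> s1" using fin[OF n(1)] by (cases "SD \<mu> \<nu>1 \<pi>" rule: ennreal_cases) auto
  obtain s2 where s2: "SD \<mu> \<nu>2 \<pi> = ennreal s2" "0 \<le> s2" using fin[OF n(2)] by (cases "SD \<mu> \<nu>2 \<pi>" rule: ennreal_cases) auto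
  have e: "ennreal t * SD \<mu> \<nu>1 \<pi> + ennreal (1 - t) * SD \<mu> \<nu>2 \<pi> = ennreal (t * s1 + (1 - t) * s2)"
    using s1 s2 t by (simp add: ennreal_mult)
  have "enn2real (SD \<mu> (mixp t \<nu>1 \<nu>2) \<pi>) \<le> enn2real (ennreal (t * s1 + (1 - t) * s2))"
    using SD_convex[OF n t, of \<mu> \<pi>] unfolding e by (intro enn2real_mono) auto
  also have "\<dots> = t * s1 + (1 - t) * s2" by (rule enn2real_ennreal) (use s1 s2 t in auto)
  finally have "(1 / \<eta>) * enn2real (SD \<mu> (mixp t \<nu>1 \<nu>2) \<pi>) \<le> (1 / \<eta>) * (t * s1 + (1 - t) * s2)"
    using eta by (intro mult_left_mono) auto
  moreover have "t * gR \<mu> \<nu>1 \<pi> + (1 - t) * gR \<mu> \<nu>2 \<pi> = t * G \<nu>1 \<pi> + (1 - t) * G \<nu>2 \<pi> - (1 / \<eta>) * (t * s1 + (1 - t) * s2)"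
    unfolding gR_def s1(1) s2(1) using s1 s2 eta by (simp add: field_simps)
  ultimately show ?thesis unfolding gR_def G_mix[OF t] by linarith
qed

end



lemma sum_pmf_ereal_ge:
  assumes fin: "finite P" and sp: "set_pmf p \<subseteq> P" and p0: "\<pi>0 \<in> P"
    and mn: "\<And>\<pi>. \<pi> \<in> P \<Longrightarrow> a \<pi>0 \<le> a \<pi>" and nf: "a \<pi>0 \<noteq> \<infinity>"
  shows "a \<pi>0 \<le> (\<Sum>\<pi>\<in>P. ereal (pmf p \<pi>) * a \<pi>)"
proof (cases "a \<pi>0")
  case (real r)
  have "(\<Sum>\<pi>\<in>P. ereal (pmf p \<pi>) * a \<pi>0) \<le> (\<Sum>\<pi>\<in>P. ereal (pmf p \<pi>) * a \<pi>)"
    using mn by (intro sum_mono ereal_mult_left_mono) auto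
  moreover have "(\<Sum>\<pi>\<in>P. ereal (pmf p \<pi>) * a \<pi>0) = a \<pi>0"
    using real sum_pmf_eq_1[OF fin sp] by (simp add: sum_distrib_right[symmetric])
  ultimately show ?thesis by simp
next
  case PInf
  then show ?thesis using nf by simp
next
  case MInf then show ?thesis by simp
qed

lemma ex_min_on: "finite P \<Longrightarrow> P \<noteq> {} \<Longrightarrow> \<exists>\<pi>0\<in>P. \<forall>\<pi>\<in>P. (a::'b \<Rightarrow> ereal) \<pi>0 \<le> a \<pi>"
proof -
  assume "finite P" "P \<noteq> {}"
  then have "Min (a ` P) \<in> a ` P" "\<forall>\<pi>\<in>P. Min (a ` P) \<le> a \<pi>" by auto
  then show ?thesis by force
qed

context setting begin

lemma aI_le_dI: "SD \<mu> \<nu> \<pi> \<le> SA \<rho> \<nu> \<pi> \<Longrightarrow> aI \<rho> \<nu> \<pi> \<le> dI \<mu> \<nu> \<pi>"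
  unfolding aI_def dI_def
  by (intro ereal_minus_mono order_refl) (simp add: less_eq_ennreal.rep_eq[symmetric] mult_left_mono)

lemma dI_le_aI: "SA \<rho> \<nu> \<pi> \<le> SD \<mu> \<nu> \<pi> \<Longrightarrow> dI \<mu> \<nu> \<pi> \<le> aI \<rho> \<nu> \<pi>"
  unfolding aI_def dI_def
  by (intro ereal_minus_mono order_refl) (simp add: less_eq_ennreal.rep_eq[symmetric] mult_left_mono)

lemma aI_fin: "aI \<rho> \<nu> \<pi> \<noteq> \<infinity>"
  unfolding aI_def by (cases "enn2ereal (ennreal (1 / \<eta>) * SA \<rho> \<nu> \<pi>)") auto

lemma dI_shift:
  assumes n: "\<nu> \<in> KK" and e: "0 < \<epsilon>" "\<epsilon> < 1" and m: "set_pmf \<mu> \<subseteq> Ms"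
  shows "dI \<mu> \<nu> \<pi> \<le> ereal (gR (mue \<epsilon> \<mu>) \<nu> \<pi>) + ereal (ln (1 / (1 - \<epsilon>)) / \<eta>)"
proof (cases "SD \<mu> \<nu> \<pi> = top")
  case True
  then show ?thesis unfolding dI_def using eta by (simp add: ennreal_mult_top)
next
  case False
  then obtain s where s: "SD \<mu> \<nu> \<pi> = ennreal s" "0 \<le> s" by (cases "SD \<mu> \<nu> \<pi>" rule: ennreal_cases) auto
  have L: "0 \<le> ln (1 / (1 - \<epsilon>))" using e by auto
  have sh: "SD (mue \<epsilon> \<mu>) \<nu> \<pi> \<le> ennreal (s + ln (1 / (1 - \<epsilon>)))"
    using SD_shift[OF n e m, of \<pi>] s L by simp
  have "enn2real (SD (mue \<epsilon> \<mu>) \<nu> \<pi>) \<le> enn2real (ennreal (s + ln (1 / (1 - \<epsilon>))))"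
    by (rule enn2real_mono[OF sh]) simp
  also have "\<dots> = s + ln (1 / (1 - \<epsilon>))" by (rule enn2real_ennreal) (use s L in auto)
  finally have "enn2real (SD (mue \<epsilon> \<mu>) \<nu> \<pi>) \<le> s + ln (1 / (1 - \<epsilon>))" .
  then have "(1 / \<eta>) * enn2real (SD (mue \<epsilon> \<mu>) \<nu> \<pi>) \<le> (1 / \<eta>) * (s + ln (1 / (1 - \<epsilon>)))"
    using eta by (intro mult_left_mono) auto
  then have "G \<nu> \<pi> - s / \<eta> \<le> gR (mue \<epsilon> \<mu>) \<nu> \<pi> + ln (1 / (1 - \<epsilon>)) / \<eta>"
    unfolding gR_def by (simp add: add_divide_distrib)
  moreover have "dI \<mu> \<nu> \<pi> = ereal (G \<nu> \<pi> - s / \<eta>)"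
    unfolding dI_def s using eta s by (simp add: ennreal_mult''[symmetric] ennreal_mult[symmetric])
  ultimately show ?thesis by simp
qed

end



context setting begin

lemma main_eq:
  "(SUP \<rho>\<in>{\<rho>. set_pmf \<rho> \<subseteq> Phi}. SUP \<nu>\<in>{\<nu>. set_pmf \<nu> \<subseteq> Psi Phi}.
      INF p\<in>{p. set_pmf p \<subseteq> Pis}. AIR Obs V Pis Phi \<rho> \<eta> p \<nu>) = DEC_KL Ms Obs V Pis Phi \<eta>"
  (is "?LHS = ?RHS")
proof -
  let ?Ps = "{p. set_pmf p \<subseteq> Pis}"
  have KKe: "{\<nu>. set_pmf \<nu> \<subseteq> Psi Phi} = KK" unfolding KK_def ..
  obtain \<pi>1 where \<pi>1: "\<pi>1 \<in> Pis" using nePis by auto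
  have "return_pmf \<pi>1 \<in> ?Ps" using \<pi>1 by simp
  then have Pne: "?Ps \<noteq> {}" by blast
  show ?thesis
  proof (cases "Psi Phi = {}")
    case True
    then have "KK = {}" unfolding KK_def using set_pmf_not_empty by auto
    then show ?thesis unfolding DEC_KL_def KKe using Pne by simp
  next
    case False
    then obtain x0 where x0: "x0 \<in> Psi Phi" by auto
    have nu0: "return_pmf x0 \<in> KK" unfolding KK_def using x0 by simp
    show ?thesis unfolding KKe
    proof (rule antisym)
      show "(SUP \<rho>\<in>{\<rho>. set_pmf \<rho> \<subseteq> Phi}. SUP \<nu>\<in>KK. INF p\<in>?Ps. AIR Obs V Pis Phi \<rho> \<eta> p \<nu>) \<le> ?RHS"
      proof (intro SUP_least)
        fix \<rho> \<nu> assume r: "\<rho> \<in> {\<rho>. set_pmf \<rho> \<subseteq> Phi}" and n: "\<nu> \<in> KK"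
        define \<mu>0 where "\<mu>0 = map_pmf fst \<nu>"
        have m0: "\<mu>0 \<in> {\<mu>. set_pmf \<mu> \<subseteq> Ms}" unfolding \<mu>0_def using n PsiSub unfolding KK_def by auto
        have "(INF p\<in>?Ps. AIR Obs V Pis Phi \<rho> \<eta> p \<nu>) \<le> (INF p\<in>?Ps. SUP \<nu>'\<in>KK. DEC_obj Obs V Pis Phi \<eta> \<mu>0 p \<nu>')"
        proof (rule INF_mono)
          fix p assume p: "p \<in> ?Ps"
          have "AIR Obs V Pis Phi \<rho> \<eta> p \<nu> \<le> DEC_obj Obs V Pis Phi \<eta> \<mu>0 p \<nu>"
            unfolding AIR_eq DEC_eq[OF n] \<mu>0_def
            using A1[OF n] r by (intro sum_mono ereal_mult_left_mono aI_le_dI) auto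
          also have "\<dots> \<le> (SUP \<nu>'\<in>KK. DEC_obj Obs V Pis Phi \<eta> \<mu>0 p \<nu>')" using n by (rule SUP_upper)
          finally show "\<exists>p'\<in>?Ps. AIR Obs V Pis Phi \<rho> \<eta> p' \<nu> \<le> (SUP \<nu>'\<in>KK. DEC_obj Obs V Pis Phi \<eta> \<mu>0 p \<nu>')"
            using p by blast
        qed
        also have "\<dots> \<le> ?RHS" unfolding DEC_KL_def KKe using m0 by (rule SUP_upper)
        finally show "(INF p\<in>?Ps. AIR Obs V Pis Phi \<rho> \<eta> p \<nu>) \<le> ?RHS" .
      qed
    next
      let ?L = "(SUP \<rho>\<in>{\<rho>. set_pmf \<rho> \<subseteq> Phi}. SUP \<nu>\<in>KK. INF p\<in>?Ps. AIR Obs V Pis Phi \<rho> \<eta> p \<nu>)"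
      show "?RHS \<le> ?L"
        unfolding DEC_KL_def KKe
      proof (intro SUP_least)
        fix \<mu> assume m: "\<mu> \<in> {\<mu>. set_pmf \<mu> \<subseteq> Ms}"
        show "(INF p\<in>?Ps. SUP \<nu>\<in>KK. DEC_obj Obs V Pis Phi \<eta> \<mu> p \<nu>) \<le> ?L"
        proof (rule ereal_le_epsilon2)
          fix e :: real assume e: "0 < e"
          define \<epsilon> where "\<epsilon> = 1 - exp (- (e * \<eta>))"
          have e1: "0 < \<epsilon>" "\<epsilon> < 1" unfolding \<epsilon>_def using e eta by auto
          have Le: "ln (1 / (1 - \<epsilon>)) / \<eta> = e" unfolding \<epsilon>_def using eta by (simp add: ln_div)
          define g where "g \<pi> \<nu> = gR (mue \<epsilon> \<mu>) \<nu> \<pi>" for \<pi> \<nu>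
          have ms: "set_pmf \<mu> \<subseteq> Ms" using m by auto
          have fin: "\<And>\<nu> \<pi>. \<nu> \<in> KK \<Longrightarrow> SD (mue \<epsilon> \<mu>) \<nu> \<pi> < \<infinity>" using SD_fin e1 ms by auto
          have dIr: "\<And>\<nu> \<pi>. \<nu> \<in> KK \<Longrightarrow> dI (mue \<epsilon> \<mu>) \<nu> \<pi> = ereal (g \<pi> \<nu>)"
            unfolding g_def using fin dI_real by auto
          have claim: "\<exists>\<pi>\<in>Pis. ereal (g \<pi> \<nu>) \<le> ?L" if n: "\<nu> \<in> KK" for \<nu>
          proof -
            obtain \<pi>0 where p0: "\<pi>0 \<in> Pis" and mn: "\<forall>\<pi>\<in>Pis. aI (cellpmf \<nu>) \<nu> \<pi>0 \<le> aI (cellpmf \<nu>) \<nu> \<pi>"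
              using ex_min_on[OF fPis nePis, of "\<lambda>\<pi>. aI (cellpmf \<nu>) \<nu> \<pi>"] by blast
            have "ereal (g \<pi>0 \<nu>) = dI (mue \<epsilon> \<mu>) \<nu> \<pi>0" using dIr[OF n] by simp
            also have "\<dots> \<le> aI (cellpmf \<nu>) \<nu> \<pi>0" by (rule dI_le_aI[OF A2[OF n]])
            also have "\<dots> \<le> (INF p\<in>?Ps. AIR Obs V Pis Phi (cellpmf \<nu>) \<eta> p \<nu>)"
              unfolding AIR_eq
              by (intro INF_greatest sum_pmf_ereal_ge[OF fPis _ p0]) (use mn aI_fin in auto)
            also have "\<dots> \<le> (SUP \<nu>'\<in>KK. INF p\<in>?Ps. AIR Obs V Pis Phi (cellpmf \<nu>) \<eta> p \<nu>')"
              using n by (rule SUP_upper)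
            also have "\<dots> \<le> ?L" using cellpmf_set[OF n] by (intro SUP_upper) auto
            finally show ?thesis using p0 by blast
          qed
          show "(INF p\<in>?Ps. SUP \<nu>\<in>KK. DEC_obj Obs V Pis Phi \<eta> \<mu> p \<nu>) \<le> ?L + ereal e"
          proof (cases ?L)
            case PInf then show ?thesis by simp
          next
            case MInf
            obtain \<pi> where "ereal (g \<pi> (return_pmf x0)) \<le> ?L" using claim[OF nu0] by blast
            then show ?thesis using MInf by simp
          next
            case (real c)
            obtain q where q: "set_pmf q \<subseteq> Pis" and qc: "\<forall>\<nu>\<in>KK. (\<Sum>\<pi>\<in>Pis. pmf q \<pi> * g \<pi> \<nu>) \<le> c"
            proof -
              have "\<exists>q. set_pmf q \<subseteq> Pis \<and> (\<forall>\<nu>\<in>KK. (\<Sum>\<pi>\<in>Pis. pmf q \<pi> * g \<pi> \<nu>) \<le> c)"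
              proof (rule minimax_fin[OF fPis nePis, where mx = mixp])
                show "\<And>a b t. a \<in> KK \<Longrightarrow> b \<in> KK \<Longrightarrow> 0 \<le> t \<Longrightarrow> t \<le> 1 \<Longrightarrow> mixp t a b \<in> KK"
                  by (rule KK_mix)
              next
                fix \<pi> a b and t :: real assume "\<pi> \<in> Pis" "a \<in> KK" "b \<in> KK" "0 \<le> t" "t \<le> 1"
                then show "t * g \<pi> a + (1 - t) * g \<pi> b \<le> g \<pi> (mixp t a b)"
                  unfolding g_def using fin by (intro gR_concave) auto
              next
                fix a assume "a \<in> KK"
                then show "\<exists>\<pi>\<in>Pis. g \<pi> a \<le> c" using claim real by auto
              qed
              then show ?thesis using that by blast
            qed
            have "(INF p\<in>?Ps. SUP \<nu>\<in>KK. DEC_obj Obs V Pis Phi \<eta> \<mu> p \<nu>) \<le> (SUP \<nu>\<in>KK. DEC_obj Obs V Pis Phi \<eta> \<mu> q \<nu>)"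
              using q by (intro INF_lower) auto
            also have "\<dots> \<le> ereal (c + e)"
            proof (intro SUP_least)
              fix \<nu> assume n: "\<nu> \<in> KK"
              have "DEC_obj Obs V Pis Phi \<eta> \<mu> q \<nu> \<le> (\<Sum>\<pi>\<in>Pis. ereal (pmf q \<pi>) * ereal (g \<pi> \<nu> + e))"
                unfolding DEC_eq[OF n]
              proof (intro sum_mono ereal_mult_left_mono)
                fix \<pi> assume "\<pi> \<in> Pis"
                show "dI \<mu> \<nu> \<pi> \<le> ereal (g \<pi> \<nu> + e)"
                  using dI_shift[OF n e1 ms, of \<pi>] unfolding g_def Le by simp
              qed auto
              also have "\<dots> = ereal (\<Sum>\<pi>\<in>Pis. pmf q \<pi> * g \<pi> \<nu> + pmf q \<pi> * e)"
                by (simp add: algebra_simps)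
              also have "(\<Sum>\<pi>\<in>Pis. pmf q \<pi> * g \<pi> \<nu> + pmf q \<pi> * e) = (\<Sum>\<pi>\<in>Pis. pmf q \<pi> * g \<pi> \<nu>) + e"
                using sum_pmf_eq_1[OF fPis q] by (simp add: sum.distrib sum_distrib_right[symmetric])
              also have "ereal \<dots> \<le> ereal (c + e)" using qc n by simp
              finally show "DEC_obj Obs V Pis Phi \<eta> \<mu> q \<nu> \<le> ereal (c + e)" .
            qed
            also have "\<dots> = ?L + ereal e" using real by simp
            finally show ?thesis .
          qed
        qed
      qed
    qed
  qed
qed

end



theorem mainTheorem2:
  fixes Ms :: "'m set" and Pis :: "'p set"
    and Obs :: "'m \<Rightarrow> 'p \<Rightarrow> 'o pmf" and V :: "'m \<Rightarrow> 'p \<Rightarrow> real"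
    and Phi :: "('m \<times> 'p) set set" and \<eta> :: real
  assumes "finite Ms" and "Ms \<noteq> {}" and "finite Pis" and "Pis \<noteq> {}"
    and "\<And>M \<pi>. M \<in> Ms \<Longrightarrow> \<pi> \<in> Pis \<Longrightarrow> 0 \<le> V M \<pi> \<and> V M \<pi> \<le> 1"
    and "\<And>\<phi>. \<phi> \<in> Phi \<Longrightarrow> \<phi> \<subseteq> Ms \<times> Pis"
    and "\<And>\<phi> \<phi>'. \<phi> \<in> Phi \<Longrightarrow> \<phi>' \<in> Phi \<Longrightarrow> \<phi> \<noteq> \<phi>' \<Longrightarrow> \<phi> \<inter> \<phi>' = {}"
    and "\<eta> > 0"
  shows "(SUP \<rho>\<in>{\<rho>. set_pmf \<rho> \<subseteq> Phi}. SUP \<nu>\<in>{\<nu>. set_pmf \<nu> \<subseteq> Psi Phi}.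
            INF p\<in>{p. set_pmf p \<subseteq> Pis}. AIR Obs V Pis Phi \<rho> \<eta> p \<nu>)
         = DEC_KL Ms Obs V Pis Phi \<eta>"
proof -
  interpret setting Ms Pis Obs V Phi \<eta> using assms by unfold_locales auto
  show ?thesis by (rule main_eq)
qed

end
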